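(* For every filter $\xi$ on $X$, $\mathscr{G}_\xi(X)$ is a closed two-sided ideal of $\mathscr{E}(X)$ and $\mathscr{J}_{\mathrm{co}(\xi)}(X)\subset\mathscr{G}_\xi(X)$. If $\xi$ is coarse, then $\mathscr{J}_\xi(X)$ is also a closed two-sided ideal of $\mathscr{E}(X)$ and $\mathscr{J}_\xi(X)\subset\mathscr{G}_\xi(X)$.
   Context: $(X,d)$ is a non-compact proper metric space, $B_x(r)=\{y:d(x,y)\le r\}$, and $\mu$ is a Radon measure with support $X$ such that $\mu(B_x(r))>0$ and $\sup_x\mu(B_x(r))<\infty$ for all $r>0$. On $L^2(X,\mu)$, $\mathbf{1}_A$ is multiplication by the characteristic function of measurable $A$. A kernel $k$ on $X\times X$ is controlled if $k(x,y)=0$ whenever $d(x,y)>r$ for some $r$; $\mathscr{E}(X)$ is the norm closure of the operators $(Op(k)f)(x)=\int k(x,y)f(y)d\mu(y)$, $k$ bounded, uniformly continuous and controlled. A filter is a nonempty family of subsets, not containing $\emptyset$, stable under finite intersections and supersets; $\lim_{x\to\xi}f(x)=0$ means $\{x:|f(x)|<\varepsilon\}\in\xi$ for all $\varepsilon>0$. $F^{(r)}=\{x:\inf_{y\notin F}d(x,y)>r\}$; a filter $\eta$ is coarse if $F\in\eta\Rightarrow F^{(r)}\in\eta$ for all $r>0$; $\mathrm{co}(\xi)=\{F:F^{(r)}\in\xi\ \forall r>0\}$, the largest coarse filter contained in $\xi$. For a filter $\eta$, $\mathscr{J}_\eta(X)=\{T\in\mathscr{E}(X):\inf_F\|\mathbf{1}_FT\|=0\}$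 (infimum over measurable $F\in\eta$) and $\mathscr{G}_\eta(X)=\{T\in\mathscr{E}(X):\lim_{x\to\eta}\|\mathbf{1}_{B_x(r)}T\|=0\ \forall r>0\}$. *)

theory Defs
  imports "HOL-Analysis.Analysis"
begin

text \<open>Elements of L^2 are represented by square-integrable Borel functions
  X -> complex (equality in L^2 is equality almost everywhere).\<close>

definition L2 :: "'a measure \<Rightarrow> ('a \<Rightarrow> complex) set" where
  "L2 M = {f. f \<in> borel_measurable M \<and> integrable M (\<lambda>x. (cmod (f x))\<^sup>2)}"

definition l2norm :: "'a measure \<Rightarrow> ('a \<Rightarrow> complex) \<Rightarrow> real" where
  "l2norm M f = sqrt (\<integral>x. (cmod (f x))\<^sup>2 \<partial>M)"

type_synonym 'a op = "('a \<Rightarrow> complex) \<Rightarrow> ('a \<Rightarrow> complex)"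

definition bounded_op :: "'a measure \<Rightarrow> 'a op \<Rightarrow> bool" where
  "bounded_op M T \<longleftrightarrow>
     (\<forall>f\<in>L2 M. T f \<in> L2 M) \<and>
     (\<forall>f\<in>L2 M. \<forall>g\<in>L2 M. (AE x in M. f x = g x) \<longrightarrow> (AE x in M. T f x = T g x)) \<and>
     (\<forall>f\<in>L2 M. \<forall>g\<in>L2 M. AE x in M. T (\<lambda>y. f y + g y) x = T f x + T g x) \<and>
     (\<forall>f\<in>L2 M. \<forall>c. AE x in M. T (\<lambda>y. c * f y) x = c * T f x) \<and>
     (\<exists>C. \<forall>f\<in>L2 M. l2norm M (T f) \<le> C * l2norm M f)"

definition opnorm :: "'a measure \<Rightarrow> 'a op \<Rightarrow> real" where
  "opnorm M T = Sup {l2norm M (T f) | f. f \<in> L2 M \<and> l2norm M f \<le> 1}"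

definition mult_ind :: "'a set \<Rightarrow> 'a op" where
  "mult_ind A = (\<lambda>f x. indicator A x * f x)"

definition op_add :: "'a op \<Rightarrow> 'a op \<Rightarrow> 'a op" where
  "op_add S T = (\<lambda>f x. S f x + T f x)"
definition op_diff :: "'a op \<Rightarrow> 'a op \<Rightarrow> 'a op" where
  "op_diff S T = (\<lambda>f x. S f x - T f x)"
definition op_scale :: "complex \<Rightarrow> 'a op \<Rightarrow> 'a op" where
  "op_scale c T = (\<lambda>f x. c * T f x)"
definition op_zero :: "'a op" where
  "op_zero = (\<lambda>f x. 0)"

definition op_kernel :: "'a measure \<Rightarrow> ('a \<times> 'a \<Rightarrow> complex) \<Rightarrow> 'a op" where
  "op_kernel M k = (\<lambda>f x. \<integral>y. k (x, y) * f y \<partial>M)"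

definition controlled :: "('a::metric_space \<times> 'a \<Rightarrow> complex) \<Rightarrow> bool" where
  "controlled k \<longleftrightarrow> (\<exists>r. \<forall>x y. dist x y > r \<longrightarrow> k (x, y) = 0)"

definition good_kernel :: "('a::metric_space \<times> 'a \<Rightarrow> complex) \<Rightarrow> bool" where
  "good_kernel k \<longleftrightarrow> bounded (range k) \<and> uniformly_continuous_on UNIV k \<and> controlled k"

definition roe :: "'a::metric_space measure \<Rightarrow> 'a op set" where
  "roe M = {T. bounded_op M T \<and>
     (\<forall>\<epsilon>>0. \<exists>k. good_kernel k \<and> opnorm M (op_diff T (op_kernel M k)) < \<epsilon>)}"

definition closed_ideal :: "'a::metric_space measure \<Rightarrow> 'a op set \<Rightarrow> bool" where
  "closed_ideal M I \<longleftrightarrow>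
     I \<subseteq> roe M \<and> op_zero \<in> I \<and>
     (\<forall>S\<in>I. \<forall>T\<in>I. op_add S T \<in> I) \<and>
     (\<forall>c::complex. \<forall>T\<in>I. op_scale c T \<in> I) \<and>
     (\<forall>A\<in>roe M. \<forall>T\<in>I. A \<circ> T \<in> I \<and> T \<circ> A \<in> I) \<and>
     (\<forall>T\<in>roe M. (\<forall>\<epsilon>>0. \<exists>S\<in>I. opnorm M (op_diff T S) < \<epsilon>) \<longrightarrow> T \<in> I)"

text \<open>F^(r) = {x. inf_{y notin F} d(x,y) > r}, with inf of the empty set = +infinity.\<close>
definition rint :: "'a::metric_space set \<Rightarrow> real \<Rightarrow> 'a set" where
  "rint F r = {x. \<exists>\<delta>>r. \<forall>y. y \<notin> F \<longrightarrow> \<delta> \<le> dist x y}"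

definition coarse :: "'a::metric_space filter \<Rightarrow> bool" where
  "coarse \<eta> \<longleftrightarrow> (\<forall>F. eventually (\<lambda>x. x \<in> F) \<eta> \<longrightarrow>
                     (\<forall>r>0. eventually (\<lambda>x. x \<in> rint F r) \<eta>))"

lemma is_filter_co:
  "is_filter (\<lambda>P. \<forall>r>0. eventually (\<lambda>x. x \<in> rint {x. P x} r) (\<xi>::'a::metric_space filter))"
proof
  show "\<forall>r>0. eventually (\<lambda>x. x \<in> rint {x. True} r) \<xi>"
  proof (intro allI impI)
    fix r :: real
    have "rint {x. True} r = UNIV"
      unfolding rint_def by (auto intro!: exI[of _ "r + 1"])
    then show "eventually (\<lambda>x. x \<in> rint {x. True} r) \<xi>" by (subst \<open>rint {x. True} r = UNIV\<close>) (rule always_eventually, simp)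
  qed
next
  fix P Q
  assume P: "\<forall>r>0. eventually (\<lambda>x. x \<in> rint {x. P x} r) \<xi>"
     and Q: "\<forall>r>0. eventually (\<lambda>x. x \<in> rint {x. Q x} r) \<xi>"
  show "\<forall>r>0. eventually (\<lambda>x. x \<in> rint {x. P x \<and> Q x} r) \<xi>"
  proof (intro allI impI)
    fix r :: real assume "r > 0"
    with P Q have "eventually (\<lambda>x. x \<in> rint {x. P x} r \<and> x \<in> rint {x. Q x} r) \<xi>"
      by (auto intro: eventually_conj)
    then show "eventually (\<lambda>x. x \<in> rint {x. P x \<and> Q x} r) \<xi>"
    proof (rule eventually_mono)
      fix x assume "x \<in> rint {x. P x} r \<and> x \<in> rint {x. Q x} r"
      then obtain d1 d2 where "d1 > r" "\<forall>y. \<not> P y \<longrightarrow> d1 \<le> dist x y"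
        "d2 > r" "\<forall>y. \<not> Q y \<longrightarrow> d2 \<le> dist x y" by (auto simp: rint_def)
      then show "x \<in> rint {x. P x \<and> Q x} r"
        unfolding rint_def by (intro CollectI exI[of _ "min d1 d2"]) auto
    qed
  qed
next
  fix P Q
  assume PQ: "\<forall>x. P x \<longrightarrow> Q x" "\<forall>r>0. eventually (\<lambda>x. x \<in> rint {x. P x} r) \<xi>"
  then show "\<forall>r>0. eventually (\<lambda>x. x \<in> rint {x. Q x} r) \<xi>"
  proof (intro allI impI)
    fix r :: real assume "r > 0"
    with PQ have "eventually (\<lambda>x. x \<in> rint {x. P x} r) \<xi>" by blast
    moreover have "rint {x. P x} r \<subseteq> rint {x. Q x} r"
      using PQ(1) unfolding rint_def by blast
    ultimately show "eventually (\<lambda>x. x \<in> rint {x. Q x} r) \<xi>"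
      by (auto elim: eventually_mono)
  qed
qed

definition co :: "'a::metric_space filter \<Rightarrow> 'a filter" where
  "co \<xi> = Abs_filter (\<lambda>P. \<forall>r>0. eventually (\<lambda>x. x \<in> rint {x. P x} r) \<xi>)"

lemma eventually_co:
  "eventually P (co \<xi>) \<longleftrightarrow> (\<forall>r>0. eventually (\<lambda>x. x \<in> rint {x. P x} r) \<xi>)"
  unfolding co_def by (rule eventually_Abs_filter[OF is_filter_co])

definition J_ideal :: "'a::metric_space measure \<Rightarrow> 'a filter \<Rightarrow> 'a op set" where
  "J_ideal M \<eta> = {T \<in> roe M.
     (INF F \<in> {F. F \<in> sets M \<and> eventually (\<lambda>x. x \<in> F) \<eta>}. opnorm M (mult_ind F \<circ> T)) = 0}"

definition G_ideal :: "'a::metric_space measure \<Rightarrow> 'a filter \<Rightarrow> 'a op set" where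
  "G_ideal M \<eta> = {T \<in> roe M.
     \<forall>r>0. ((\<lambda>x. opnorm M (mult_ind (cball x r) \<circ> T)) \<longlongrightarrow> 0) \<eta>}"

end

theory Submission
  imports Defs
begin

section \<open>L2 basics\<close>

lemma L2_meas: "f \<in> L2 M \<Longrightarrow> f \<in> borel_measurable M"
  and L2_int: "f \<in> L2 M \<Longrightarrow> integrable M (\<lambda>x. (cmod (f x))\<^sup>2)"
  by (auto simp: L2_def)

lemma L2I: "f \<in> borel_measurable M \<Longrightarrow> integrable M (\<lambda>x. (cmod (f x))\<^sup>2) \<Longrightarrow> f \<in> L2 M"
  by (auto simp: L2_def)

lemma l2norm_nonneg: "0 \<le> l2norm M f"
  unfolding l2norm_def by (simp add: integral_nonneg_AE)

lemma l2norm_sq: "(l2norm M f)\<^sup>2 = (\<integral>x. (cmod (f x))\<^sup>2 \<partial>M)"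
  unfolding l2norm_def by (simp add: integral_nonneg_AE)

lemma L2_zero: "(\<lambda>x. 0) \<in> L2 M"
  by (auto simp: L2_def)

lemma l2norm_zero: "l2norm M (\<lambda>x. 0) = 0"
  by (simp add: l2norm_def)

lemma L2_scale: "f \<in> L2 M \<Longrightarrow> (\<lambda>x. c * f x) \<in> L2 M"
  unfolding L2_def by (auto simp: norm_mult power_mult_distrib)

lemma l2norm_scale: "l2norm M (\<lambda>x. c * f x) = cmod c * l2norm M f"
  unfolding l2norm_def by (simp add: norm_mult power_mult_distrib real_sqrt_mult)

lemma L2_add: assumes "f \<in> L2 M" "g \<in> L2 M" shows "(\<lambda>x. f x + g x) \<in> L2 M"
proof (rule L2I)
  show m: "(\<lambda>x. f x + g x) \<in> borel_measurable M" using assms by (auto simp: L2_def)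
  have i: "integrable M (\<lambda>x. 2 * (cmod (f x))\<^sup>2 + 2 * (cmod (g x))\<^sup>2)"
    using assms by (auto simp: L2_def)
  show "integrable M (\<lambda>x. (cmod (f x + g x))\<^sup>2)"
  proof (rule Bochner_Integration.integrable_bound[OF i])
    show "(\<lambda>x. (cmod (f x + g x))\<^sup>2) \<in> borel_measurable M" using m by measurable
    show "AE x in M. norm ((cmod (f x + g x))\<^sup>2) \<le> norm (2 * (cmod (f x))\<^sup>2 + 2 * (cmod (g x))\<^sup>2)"
    proof (rule AE_I2)
      fix x
      have "cmod (f x + g x) \<le> cmod (f x) + cmod (g x)" by (rule norm_triangle_ineq)
      hence "(cmod (f x + g x))\<^sup>2 \<le> (cmod (f x) + cmod (g x))\<^sup>2"
        by (simp add: power_mono)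
      also have "\<dots> \<le> 2 * (cmod (f x))\<^sup>2 + 2 * (cmod (g x))\<^sup>2"
        by (smt (verit) sum_squares_bound power2_sum)
      finally show "norm ((cmod (f x + g x))\<^sup>2) \<le> norm (2 * (cmod (f x))\<^sup>2 + 2 * (cmod (g x))\<^sup>2)"
        by simp
    qed
  qed
qed

lemma L2_diff: assumes "f \<in> L2 M" "g \<in> L2 M" shows "(\<lambda>x. f x - g x) \<in> L2 M"
  using L2_add[OF assms(1) L2_scale[OF assms(2), of "-1"]] by simp

lemma L2_mult_bounded:
  assumes "f \<in> L2 M" "h \<in> borel_measurable M" "\<And>x. cmod (h x) \<le> 1"
  shows "(\<lambda>x. h x * f x) \<in> L2 M"
proof (rule L2I)
  show m: "(\<lambda>x. h x * f x) \<in> borel_measurable M" using assms by (auto simp: L2_def)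
  show "integrable M (\<lambda>x. (cmod (h x * f x))\<^sup>2)"
  proof (rule Bochner_Integration.integrable_bound[OF L2_int[OF assms(1)]])
    show "(\<lambda>x. (cmod (h x * f x))\<^sup>2) \<in> borel_measurable M" using m by measurable
    show "AE x in M. norm ((cmod (h x * f x))\<^sup>2) \<le> norm ((cmod (f x))\<^sup>2)"
    proof (rule AE_I2)
      fix x
      have "cmod (h x * f x) \<le> cmod (f x)"
        using assms(3)[of x] by (simp add: norm_mult mult_left_le_one_le)
      then show "norm ((cmod (h x * f x))\<^sup>2) \<le> norm ((cmod (f x))\<^sup>2)"
        by (simp add: power_mono)
    qed
  qed
qed

lemma L2_ind: "A \<in> sets M \<Longrightarrow> f \<in> L2 M \<Longrightarrow> mult_ind A f \<in> L2 M"
  unfolding mult_ind_def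
  by (rule L2_mult_bounded) (auto simp: indicator_def)

lemma l2norm_le_pointwise:
  assumes "f \<in> L2 M" "\<And>x. cmod (g x) \<le> cmod (f x)"
  shows "l2norm M g \<le> l2norm M f"
proof (cases "integrable M (\<lambda>x. (cmod (g x))\<^sup>2)")
  case True
  have "(\<integral>x. (cmod (g x))\<^sup>2 \<partial>M) \<le> (\<integral>x. (cmod (f x))\<^sup>2 \<partial>M)"
    using True L2_int[OF assms(1)] assms(2) by (intro integral_mono) (auto simp: power_mono)
  then show ?thesis unfolding l2norm_def by simp
next
  case False
  then show ?thesis unfolding l2norm_def
    by (simp add: not_integrable_integral_eq integral_nonneg_AE)
qed

lemma l2norm_cong_AE:
  assumes "f \<in> borel_measurable M" "g \<in> borel_measurable M" "AE x in M. f x = g x"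
  shows "l2norm M f = l2norm M g"
proof -
  have "(\<integral>x. (cmod (f x))\<^sup>2 \<partial>M) = (\<integral>x. (cmod (g x))\<^sup>2 \<partial>M)"
    using assms by (intro integral_cong_AE) (auto elim!: eventually_mono)
  then show ?thesis unfolding l2norm_def by simp
qed

lemma l2norm_eq_0:
  assumes "f \<in> L2 M" "l2norm M f = 0"
  shows "AE x in M. f x = 0"
proof -
  have "(\<integral>x. (cmod (f x))\<^sup>2 \<partial>M) = 0" using assms(2) l2norm_sq[of M f] by simp
  then have "AE x in M. (cmod (f x))\<^sup>2 = 0"
    using L2_int[OF assms(1)] by (subst (asm) integral_nonneg_eq_0_iff_AE) auto
  then show ?thesis by (auto elim!: eventually_mono)
qed

lemma amgm_sqrt:
  fixes I A B :: real
  assumes "A \<ge> 0" "B \<ge> 0" "\<And>t. t > 0 \<Longrightarrow> I \<le> (t * A + B / t) / 2"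
  shows "I \<le> sqrt A * sqrt B"
proof (cases "A > 0 \<and> B > 0")
  case True
  define a b where "a = sqrt A" and "b = sqrt B"
  have a: "a > 0" "A = a * a" and b: "b > 0" "B = b * b"
    using True by (auto simp: a_def b_def)
  have "b / a > 0" using a b by simp
  from assms(3)[OF this] have "I \<le> (b / a * A + B / (b / a)) / 2" .
  also have "\<dots> = a * b" using a b by (simp add: field_simps)
  finally show ?thesis by (simp add: a_def b_def)
next
  case False
  then have "A = 0 \<or> B = 0" using assms by auto
  show ?thesis
  proof (rule ccontr)
    assume "\<not> ?thesis"
    then have I: "I > 0" using \<open>A = 0 \<or> B = 0\<close> by auto
    show False
    proof (cases "A = 0")
      case True
      have "I \<le> (((B + 1) / I) * A + B / ((B + 1) / I)) / 2"
        using assms(3)[of "(B+1)/I"] I assms by simp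
      also have "\<dots> = (B * I / (B + 1)) / 2" using True I assms by (simp add: field_simps)
      also have "\<dots> < I"
      proof -
        have "B * I / (B + 1) \<le> I" using I assms(2) by (simp add: divide_le_eq algebra_simps)
        then have "B * I / (B + 1) / 2 \<le> I / 2" by (rule divide_right_mono) simp_all
        then show ?thesis using I by linarith
      qed
      finally show False by simp
    next
      case False
      then have B0: "B = 0" using \<open>A = 0 \<or> B = 0\<close> by simp
      have "I \<le> ((I / (A + 1)) * A + B / (I / (A + 1))) / 2"
        using assms(3)[of "I/(A+1)"] I assms by simp
      also have "\<dots> = (I * A / (A + 1)) / 2" using B0 I assms by (simp add: field_simps)
      also have "\<dots> < I"
      proof -
        have "I * A / (A + 1) \<le> I" using I assms(1) by (simp add: divide_le_eq algebra_simps)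
        then have "I * A / (A + 1) / 2 \<le> I / 2" by (rule divide_right_mono) simp_all
        then show ?thesis using I by linarith
      qed
      finally show False by simp
    qed
  qed
qed

lemma cauchy_schwarz_int:
  fixes f g :: "'a \<Rightarrow> real"
  assumes [measurable]: "f \<in> borel_measurable M" "g \<in> borel_measurable M"
    and fi: "integrable M (\<lambda>x. (f x)\<^sup>2)" and gi: "integrable M (\<lambda>x. (g x)\<^sup>2)"
  shows "integrable M (\<lambda>x. \<bar>f x * g x\<bar>)"
    and "(\<integral>x. \<bar>f x * g x\<bar> \<partial>M) \<le> sqrt (\<integral>x. (f x)\<^sup>2 \<partial>M) * sqrt (\<integral>x. (g x)\<^sup>2 \<partial>M)"
proof -
  have pw: "\<bar>f x * g x\<bar> \<le> (t * (f x)\<^sup>2 + (g x)\<^sup>2 / t) / 2" if "t > 0" for t x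
  proof -
    have "0 \<le> (t * \<bar>f x\<bar> - \<bar>g x\<bar>)\<^sup>2" by simp
    hence "2 * t * (\<bar>f x\<bar> * \<bar>g x\<bar>) \<le> t\<^sup>2 * (f x)\<^sup>2 + (g x)\<^sup>2"
      by (simp add: power2_eq_square algebra_simps)
    hence "\<bar>f x\<bar> * \<bar>g x\<bar> \<le> (t\<^sup>2 * (f x)\<^sup>2 + (g x)\<^sup>2) / (2 * t)"
      using that by (simp add: field_simps)
    also have "\<dots> = (t * (f x)\<^sup>2 + (g x)\<^sup>2 / t) / 2"
      using that by (simp add: field_simps power2_eq_square)
    finally show ?thesis by (simp add: abs_mult)
  qed
  have int_t: "integrable M (\<lambda>x. (t * (f x)\<^sup>2 + (g x)\<^sup>2 / t) / 2)" for t
    using fi gi by auto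
  show int: "integrable M (\<lambda>x. \<bar>f x * g x\<bar>)"
    by (rule Bochner_Integration.integrable_bound[OF int_t[of 1]]) (use pw[of 1] in auto)
  show "(\<integral>x. \<bar>f x * g x\<bar> \<partial>M) \<le> sqrt (\<integral>x. (f x)\<^sup>2 \<partial>M) * sqrt (\<integral>x. (g x)\<^sup>2 \<partial>M)"
  proof (rule amgm_sqrt)
    show "0 \<le> (\<integral>x. (f x)\<^sup>2 \<partial>M)" "0 \<le> (\<integral>x. (g x)\<^sup>2 \<partial>M)" by (auto intro: integral_nonneg_AE)
    fix t :: real assume t: "t > 0"
    have "(\<integral>x. \<bar>f x * g x\<bar> \<partial>M) \<le> (\<integral>x. (t * (f x)\<^sup>2 + (g x)\<^sup>2 / t) / 2 \<partial>M)"
      by (rule integral_mono[OF int int_t]) (use pw[OF t] in auto)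
    also have "\<dots> = (t * (\<integral>x. (f x)\<^sup>2 \<partial>M) + (\<integral>x. (g x)\<^sup>2 \<partial>M) / t) / 2"
      using fi gi by simp
    finally show "(\<integral>x. \<bar>f x * g x\<bar> \<partial>M) \<le> (t * (\<integral>x. (f x)\<^sup>2 \<partial>M) + (\<integral>x. (g x)\<^sup>2 \<partial>M) / t) / 2" .
  qed
qed

lemma minkowski:
  assumes f: "f \<in> L2 M" and g: "g \<in> L2 M"
  shows "l2norm M (\<lambda>x. f x + g x) \<le> l2norm M f + l2norm M g"
proof -
  have [measurable]: "f \<in> borel_measurable M" "g \<in> borel_measurable M" using f g by (auto simp: L2_def)
  have fi: "integrable M (\<lambda>x. (cmod (f x))\<^sup>2)" and gi: "integrable M (\<lambda>x. (cmod (g x))\<^sup>2)"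
    using f g by (auto simp: L2_def)
  note cs = cauchy_schwarz_int[of "\<lambda>x. cmod (f x)" M "\<lambda>x. cmod (g x)", OF _ _ fi gi]
  have csi: "integrable M (\<lambda>x. cmod (f x) * cmod (g x))" using cs(1) by simp
  have csb: "(\<integral>x. cmod (f x) * cmod (g x) \<partial>M) \<le> l2norm M f * l2norm M g"
    using cs(2) by (simp add: l2norm_def)
  have fgi: "integrable M (\<lambda>x. (cmod (f x + g x))\<^sup>2)" using L2_add[OF f g] by (simp add: L2_def)
  have "(l2norm M (\<lambda>x. f x + g x))\<^sup>2 = (\<integral>x. (cmod (f x + g x))\<^sup>2 \<partial>M)" by (rule l2norm_sq)
  also have "\<dots> \<le> (\<integral>x. (cmod (f x))\<^sup>2 + 2 * (cmod (f x) * cmod (g x)) + (cmod (g x))\<^sup>2 \<partial>M)"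
  proof (rule integral_mono[OF fgi])
    show "integrable M (\<lambda>x. (cmod (f x))\<^sup>2 + 2 * (cmod (f x) * cmod (g x)) + (cmod (g x))\<^sup>2)"
      using fi gi csi by auto
    fix x
    have "cmod (f x + g x) \<le> cmod (f x) + cmod (g x)" by (rule norm_triangle_ineq)
    hence "(cmod (f x + g x))\<^sup>2 \<le> (cmod (f x) + cmod (g x))\<^sup>2" by (simp add: power_mono)
    then show "(cmod (f x + g x))\<^sup>2 \<le> (cmod (f x))\<^sup>2 + 2 * (cmod (f x) * cmod (g x)) + (cmod (g x))\<^sup>2"
      by (simp add: power2_sum)
  qed
  also have "\<dots> = (l2norm M f)\<^sup>2 + 2 * (\<integral>x. cmod (f x) * cmod (g x) \<partial>M) + (l2norm M g)\<^sup>2"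
    using fi gi csi by (simp add: l2norm_sq)
  also have "\<dots> \<le> (l2norm M f + l2norm M g)\<^sup>2"
    using csb by (simp add: power2_sum)
  finally show ?thesis
    using l2norm_nonneg[of M f] l2norm_nonneg[of M g] l2norm_nonneg[of M "\<lambda>x. f x + g x"]
    by (meson add_nonneg_nonneg power2_le_imp_le)
qed

lemma minkowski_diff:
  assumes f: "f \<in> L2 M" and g: "g \<in> L2 M"
  shows "l2norm M (\<lambda>x. f x - g x) \<le> l2norm M f + l2norm M g"
  using minkowski[OF f L2_scale[OF g, of "-1"]] l2norm_scale[of M "-1" g] by simp

section \<open>Operator norm\<close>

lemma opnorm_le:
  assumes "C \<ge> 0" "\<And>f. f \<in> L2 M \<Longrightarrow> l2norm M (T f) \<le> C * l2norm M f"
  shows "opnorm M T \<le> C"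
  unfolding opnorm_def
proof (rule cSup_least)
  show "{l2norm M (T f) |f. f \<in> L2 M \<and> l2norm M f \<le> 1} \<noteq> {}"
    using L2_zero[of M] l2norm_zero[of M] by force
  fix y assume "y \<in> {l2norm M (T f) |f. f \<in> L2 M \<and> l2norm M f \<le> 1}"
  then obtain f where f: "f \<in> L2 M" "l2norm M f \<le> 1" "y = l2norm M (T f)" by auto
  have "y \<le> C * l2norm M f" using assms(2) f by simp
  also have "\<dots> \<le> C * 1" using f(2) assms(1) by (intro mult_left_mono) auto
  finally show "y \<le> C" by simp
qed

lemma bounded_opD:
  assumes "bounded_op M T"
  shows "\<And>f. f \<in> L2 M \<Longrightarrow> T f \<in> L2 M"
    and "\<And>f g. f \<in> L2 M \<Longrightarrow> g \<in> L2 M \<Longrightarrow> AE x in M. f x = g x \<Longrightarrow> AE x in M. T f x = T g x"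
    and "\<And>f g. f \<in> L2 M \<Longrightarrow> g \<in> L2 M \<Longrightarrow> AE x in M. T (\<lambda>y. f y + g y) x = T f x + T g x"
    and "\<And>f c. f \<in> L2 M \<Longrightarrow> AE x in M. T (\<lambda>y. c * f y) x = c * T f x"
    and "\<exists>C. \<forall>f\<in>L2 M. l2norm M (T f) \<le> C * l2norm M f"
  using assms unfolding bounded_op_def by blast+

lemma bounded_op_bdd:
  assumes "bounded_op M T"
  shows "bdd_above {l2norm M (T f) |f. f \<in> L2 M \<and> l2norm M f \<le> 1}"
proof -
  obtain C where C: "\<forall>f\<in>L2 M. l2norm M (T f) \<le> C * l2norm M f" using bounded_opD(5)[OF assms] by blast
  show ?thesis
  proof (rule bdd_aboveI)
    fix y assume "y \<in> {l2norm M (T f) |f. f \<in> L2 M \<and> l2norm M f \<le> 1}"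
    then obtain f where f: "f \<in> L2 M" "l2norm M f \<le> 1" "y = l2norm M (T f)" by auto
    have "y \<le> C * l2norm M f" using C f by simp
    also have "\<dots> \<le> max C 0"
      using f(2) l2norm_nonneg[of M f]
      by (cases "C \<ge> 0") (auto simp: mult_left_le intro: mult_nonpos_nonneg order_trans[of _ 0])
    finally show "y \<le> max C 0" .
  qed
qed

lemma opnorm_upper:
  assumes "bounded_op M T" "f \<in> L2 M" "l2norm M f \<le> 1"
  shows "l2norm M (T f) \<le> opnorm M T"
  unfolding opnorm_def using assms by (intro cSup_upper bounded_op_bdd) auto

lemma opnorm_nonneg: "bounded_op M T \<Longrightarrow> 0 \<le> opnorm M T"
  using opnorm_upper[of M T "\<lambda>x. 0"] L2_zero[of M] l2norm_zero[of M] l2norm_nonneg[of M "T (\<lambda>x. 0)"]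
  by simp

lemma bounded_op_zero_AE:
  assumes "bounded_op M T"
  shows "AE x in M. T (\<lambda>y. 0) x = 0"
  using bounded_opD(4)[OF assms L2_zero, of 0] by simp

lemma opnorm_bound:
  assumes T: "bounded_op M T" and f: "f \<in> L2 M"
  shows "l2norm M (T f) \<le> opnorm M T * l2norm M f"
proof (cases "l2norm M f = 0")
  case True
  have "AE x in M. f x = 0" by (rule l2norm_eq_0[OF f True])
  then have "AE x in M. T f x = T (\<lambda>y. 0) x"
    using bounded_opD(2)[OF T f L2_zero] by simp
  then have "AE x in M. T f x = 0" using bounded_op_zero_AE[OF T] by eventually_elim simp
  then have "l2norm M (T f) = l2norm M (\<lambda>x. 0)"
    using bounded_opD(1)[OF T f] by (intro l2norm_cong_AE) (auto simp: L2_def)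
  then show ?thesis using True by (simp add: l2norm_zero)
next
  case False
  define n where "n = l2norm M f"
  have n: "n > 0" using False l2norm_nonneg[of M f] by (simp add: n_def)
  define g where "g = (\<lambda>y. complex_of_real (1 / n) * f y)"
  have g: "g \<in> L2 M" unfolding g_def by (rule L2_scale[OF f])
  have ng: "l2norm M g = 1" unfolding g_def l2norm_scale using n by (simp add: n_def norm_divide)
  have "l2norm M (T g) \<le> opnorm M T" by (rule opnorm_upper[OF T g]) (simp add: ng)
  moreover have "l2norm M (T g) = l2norm M (\<lambda>x. complex_of_real (1 / n) * T f x)"
    using bounded_opD(4)[OF T f, of "complex_of_real (1 / n)"] bounded_opD(1)[OF T f] bounded_opD(1)[OF T g]
    unfolding g_def by (intro l2norm_cong_AE) (auto simp: L2_def)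
  moreover have "\<dots> = l2norm M (T f) / n"
    unfolding l2norm_scale using n by (simp add: norm_divide)
  ultimately have "l2norm M (T f) / n \<le> opnorm M T" by simp
  then show ?thesis using n by (simp add: n_def divide_le_eq mult.commute)
qed

section \<open>Closure properties of bounded operators\<close>

lemma bounded_opI:
  assumes "\<And>f. f \<in> L2 M \<Longrightarrow> T f \<in> L2 M"
    and "\<And>f g. f \<in> L2 M \<Longrightarrow> g \<in> L2 M \<Longrightarrow> AE x in M. f x = g x \<Longrightarrow> AE x in M. T f x = T g x"
    and "\<And>f g. f \<in> L2 M \<Longrightarrow> g \<in> L2 M \<Longrightarrow> AE x in M. T (\<lambda>y. f y + g y) x = T f x + T g x"
    and "\<And>f c. f \<in> L2 M \<Longrightarrow> AE x in M. T (\<lambda>y. c * f y) x = c * T f x"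
    and "\<And>f. f \<in> L2 M \<Longrightarrow> l2norm M (T f) \<le> C * l2norm M f"
  shows "bounded_op M T"
  unfolding bounded_op_def using assms by blast

lemma bounded_op_comp:
  assumes S: "bounded_op M S" and T: "bounded_op M T"
  shows "bounded_op M (S \<circ> T)"
proof (rule bounded_opI[where C="opnorm M S * opnorm M T"])
  note S' = bounded_opD[OF S] and T' = bounded_opD[OF T]
  fix f assume f: "f \<in> L2 M"
  show "(S \<circ> T) f \<in> L2 M" using S'(1) T'(1) f by simp
  show "l2norm M ((S \<circ> T) f) \<le> opnorm M S * opnorm M T * l2norm M f"
  proof -
    have "l2norm M ((S \<circ> T) f) \<le> opnorm M S * l2norm M (T f)"
      using opnorm_bound[OF S T'(1)[OF f]] by simp
    also have "\<dots> \<le> opnorm M S * (opnorm M T * l2norm M f)"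
      by (rule mult_left_mono[OF opnorm_bound[OF T f] opnorm_nonneg[OF S]])
    finally show ?thesis by (simp add: mult.assoc)
  qed
  fix c
  show "AE x in M. (S \<circ> T) (\<lambda>y. c * f y) x = c * (S \<circ> T) f x"
  proof -
    have "AE x in M. S (T (\<lambda>y. c * f y)) x = S (\<lambda>y. c * T f y) x"
      using T'(4)[OF f, of c] by (intro S'(2) T'(1) f L2_scale) auto
    moreover have "AE x in M. S (\<lambda>y. c * T f y) x = c * S (T f) x"
      by (rule S'(4)[OF T'(1)[OF f]])
    ultimately show ?thesis by eventually_elim simp
  qed
next
  note S' = bounded_opD[OF S] and T' = bounded_opD[OF T]
  fix f g assume f: "f \<in> L2 M" and g: "g \<in> L2 M"
  show "AE x in M. (S \<circ> T) (\<lambda>y. f y + g y) x = (S \<circ> T) f x + (S \<circ> T) g x"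
  proof -
    have "AE x in M. S (T (\<lambda>y. f y + g y)) x = S (\<lambda>y. T f y + T g y) x"
      using T'(3)[OF f g] by (intro S'(2) T'(1) f g L2_add) auto
    moreover have "AE x in M. S (\<lambda>y. T f y + T g y) x = S (T f) x + S (T g) x"
      by (rule S'(3)[OF T'(1)[OF f] T'(1)[OF g]])
    ultimately show ?thesis by eventually_elim simp
  qed
  assume "AE x in M. f x = g x"
  then show "AE x in M. (S \<circ> T) f x = (S \<circ> T) g x"
    using S'(2)[OF T'(1)[OF f] T'(1)[OF g] T'(2)[OF f g]] by simp
qed

lemma bounded_op_add:
  assumes S: "bounded_op M S" and T: "bounded_op M T"
  shows "bounded_op M (op_add S T)"
proof (rule bounded_opI[where C="opnorm M S + opnorm M T"])
  note S' = bounded_opD[OF S] and T' = bounded_opD[OF T]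
  fix f assume f: "f \<in> L2 M"
  show "op_add S T f \<in> L2 M" unfolding op_add_def using S'(1) T'(1) f by (intro L2_add)
  show "l2norm M (op_add S T f) \<le> (opnorm M S + opnorm M T) * l2norm M f"
  proof -
    have "l2norm M (op_add S T f) \<le> l2norm M (S f) + l2norm M (T f)"
      unfolding op_add_def by (intro minkowski S'(1) T'(1) f)
    also have "\<dots> \<le> opnorm M S * l2norm M f + opnorm M T * l2norm M f"
      by (intro add_mono opnorm_bound S T f)
    finally show ?thesis by (simp add: algebra_simps)
  qed
  fix c
  show "AE x in M. op_add S T (\<lambda>y. c * f y) x = c * op_add S T f x"
    using S'(4)[OF f, of c] T'(4)[OF f, of c] unfolding op_add_def
    by eventually_elim (simp add: algebra_simps)
next
  note S' = bounded_opD[OF S] and T' = bounded_opD[OF T]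
  fix f g assume f: "f \<in> L2 M" and g: "g \<in> L2 M"
  show "AE x in M. op_add S T (\<lambda>y. f y + g y) x = op_add S T f x + op_add S T g x"
    using S'(3)[OF f g] T'(3)[OF f g] unfolding op_add_def
    by eventually_elim (simp add: algebra_simps)
  assume ae: "AE x in M. f x = g x"
  show "AE x in M. op_add S T f x = op_add S T g x"
    using S'(2)[OF f g ae] T'(2)[OF f g ae] unfolding op_add_def by eventually_elim simp
qed

lemma bounded_op_scale:
  assumes T: "bounded_op M T"
  shows "bounded_op M (op_scale c T)"
proof (rule bounded_opI[where C="cmod c * opnorm M T"])
  note T' = bounded_opD[OF T]
  fix f assume f: "f \<in> L2 M"
  show "op_scale c T f \<in> L2 M" unfolding op_scale_def using T'(1) f by (intro L2_scale)
  show "l2norm M (op_scale c T f) \<le> cmod c * opnorm M T * l2norm M f"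
    unfolding op_scale_def l2norm_scale mult.assoc
    by (intro mult_left_mono opnorm_bound T f) simp
  fix d
  show "AE x in M. op_scale c T (\<lambda>y. d * f y) x = d * op_scale c T f x"
    using T'(4)[OF f, of d] unfolding op_scale_def by eventually_elim (simp add: algebra_simps)
next
  note T' = bounded_opD[OF T]
  fix f g assume f: "f \<in> L2 M" and g: "g \<in> L2 M"
  show "AE x in M. op_scale c T (\<lambda>y. f y + g y) x = op_scale c T f x + op_scale c T g x"
    using T'(3)[OF f g] unfolding op_scale_def by eventually_elim (simp add: algebra_simps)
  assume ae: "AE x in M. f x = g x"
  show "AE x in M. op_scale c T f x = op_scale c T g x"
    using T'(2)[OF f g ae] unfolding op_scale_def by eventually_elim simp
qed

lemma op_diff_eq: "op_diff S T = op_add S (op_scale (-1) T)"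
  by (auto simp: op_diff_def op_add_def op_scale_def fun_eq_iff)

lemma bounded_op_diff:
  "bounded_op M S \<Longrightarrow> bounded_op M T \<Longrightarrow> bounded_op M (op_diff S T)"
  unfolding op_diff_eq by (intro bounded_op_add bounded_op_scale)

lemma bounded_op_zero: "bounded_op M op_zero"
  by (rule bounded_opI[where C=0]) (auto simp: op_zero_def L2_zero l2norm_zero)

lemma bounded_op_ind:
  assumes A: "A \<in> sets M"
  shows "bounded_op M (mult_ind A)"
proof (rule bounded_opI[where C=1])
  fix f assume f: "f \<in> L2 M"
  show "mult_ind A f \<in> L2 M" by (rule L2_ind[OF A f])
  show "l2norm M (mult_ind A f) \<le> 1 * l2norm M f"
    unfolding mult_ind_def using f
    by (simp add: l2norm_le_pointwise norm_mult indicator_def)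
  fix c show "AE x in M. mult_ind A (\<lambda>y. c * f y) x = c * mult_ind A f x"
    by (simp add: mult_ind_def)
next
  fix f g assume "f \<in> L2 M" "g \<in> L2 M"
  show "AE x in M. mult_ind A (\<lambda>y. f y + g y) x = mult_ind A f x + mult_ind A g x"
    by (simp add: mult_ind_def algebra_simps)
  assume "AE x in M. f x = g x"
  then show "AE x in M. mult_ind A f x = mult_ind A g x"
    unfolding mult_ind_def by eventually_elim simp
qed

lemma opnorm_add_le:
  "bounded_op M S \<Longrightarrow> bounded_op M T \<Longrightarrow> opnorm M (op_add S T) \<le> opnorm M S + opnorm M T"
proof (rule opnorm_le)
  assume S: "bounded_op M S" and T: "bounded_op M T"
  show "0 \<le> opnorm M S + opnorm M T" using opnorm_nonneg[OF S] opnorm_nonneg[OF T] by simp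
  fix f assume f: "f \<in> L2 M"
  have "l2norm M (op_add S T f) \<le> l2norm M (S f) + l2norm M (T f)"
    unfolding op_add_def by (intro minkowski bounded_opD(1)[OF S] bounded_opD(1)[OF T] f)
  also have "\<dots> \<le> opnorm M S * l2norm M f + opnorm M T * l2norm M f"
    by (intro add_mono opnorm_bound S T f)
  finally show "l2norm M (op_add S T f) \<le> (opnorm M S + opnorm M T) * l2norm M f"
    by (simp add: algebra_simps)
qed

lemma opnorm_scale_le:
  "bounded_op M T \<Longrightarrow> opnorm M (op_scale c T) \<le> cmod c * opnorm M T"
proof (rule opnorm_le)
  assume T: "bounded_op M T"
  show "0 \<le> cmod c * opnorm M T" using opnorm_nonneg[OF T] by simp
  fix f assume f: "f \<in> L2 M"
  show "l2norm M (op_scale c T f) \<le> cmod c * opnorm M T * l2norm M f"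
    unfolding op_scale_def l2norm_scale mult.assoc
    by (intro mult_left_mono opnorm_bound T f) simp
qed

lemma opnorm_diff_le:
  assumes "bounded_op M S" "bounded_op M T"
  shows "opnorm M (op_diff S T) \<le> opnorm M S + opnorm M T"
proof -
  have "opnorm M (op_diff S T) \<le> opnorm M S + opnorm M (op_scale (-1) T)"
    unfolding op_diff_eq using assms by (intro opnorm_add_le bounded_op_scale)
  also have "opnorm M (op_scale (-1) T) \<le> opnorm M T"
    using opnorm_scale_le[OF assms(2), of "-1"] by simp
  finally show ?thesis by simp
qed

lemma opnorm_comp_le:
  assumes S: "bounded_op M S" and T: "bounded_op M T"
  shows "opnorm M (S \<circ> T) \<le> opnorm M S * opnorm M T"
proof (rule opnorm_le)
  show "0 \<le> opnorm M S * opnorm M T" using opnorm_nonneg[OF S] opnorm_nonneg[OF T] by simp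
  fix f assume f: "f \<in> L2 M"
  have "l2norm M ((S \<circ> T) f) \<le> opnorm M S * l2norm M (T f)"
    using opnorm_bound[OF S bounded_opD(1)[OF T f]] by simp
  also have "\<dots> \<le> opnorm M S * (opnorm M T * l2norm M f)"
    by (rule mult_left_mono[OF opnorm_bound[OF T f] opnorm_nonneg[OF S]])
  finally show "l2norm M ((S \<circ> T) f) \<le> opnorm M S * opnorm M T * l2norm M f"
    by (simp add: mult.assoc)
qed

lemma opnorm_ind_mono:
  assumes T: "bounded_op M T" and B: "B \<in> sets M" and AB: "A \<subseteq> B"
  shows "opnorm M (mult_ind A \<circ> T) \<le> opnorm M (mult_ind B \<circ> T)"
proof (rule opnorm_le)
  have BT: "bounded_op M (mult_ind B \<circ> T)" by (intro bounded_op_comp bounded_op_ind B T)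
  show "0 \<le> opnorm M (mult_ind B \<circ> T)" by (rule opnorm_nonneg[OF BT])
  fix f assume f: "f \<in> L2 M"
  have "l2norm M ((mult_ind A \<circ> T) f) \<le> l2norm M ((mult_ind B \<circ> T) f)"
    using bounded_opD(1)[OF BT f] AB
    by (intro l2norm_le_pointwise) (auto simp: mult_ind_def indicator_def)
  also have "\<dots> \<le> opnorm M (mult_ind B \<circ> T) * l2norm M f" by (rule opnorm_bound[OF BT f])
  finally show "l2norm M ((mult_ind A \<circ> T) f) \<le> opnorm M (mult_ind B \<circ> T) * l2norm M f" .
qed

lemma opnorm_ind_le:
  assumes T: "bounded_op M T"
  shows "opnorm M (mult_ind A \<circ> T) \<le> opnorm M T"
proof (rule opnorm_le)
  show "0 \<le> opnorm M T" by (rule opnorm_nonneg[OF T])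
  fix f assume f: "f \<in> L2 M"
  have "l2norm M ((mult_ind A \<circ> T) f) \<le> l2norm M (T f)"
    using bounded_opD(1)[OF T f]
    by (intro l2norm_le_pointwise) (auto simp: mult_ind_def indicator_def)
  also have "\<dots> \<le> opnorm M T * l2norm M f" by (rule opnorm_bound[OF T f])
  finally show "l2norm M ((mult_ind A \<circ> T) f) \<le> opnorm M T * l2norm M f" .
qed

locale ctx =
  fixes M :: "'a::metric_space measure"
  assumes sets_M: "sets M = sets borel"
    and proper: "\<forall>(x::'a) r. compact (cball x r)"
    and radon: "\<forall>K. compact K \<longrightarrow> emeasure M K < \<infinity>"
    and balls_bdd: "\<forall>r>0. \<exists>C::real. \<forall>x. emeasure M (cball x r) \<le> ennreal C"
begin

lemma space_M[simp]: "space M = UNIV"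
  using sets_eq_imp_space_eq[OF sets_M] by simp

lemma meas_M: "measurable M N = measurable borel N"
  by (rule measurable_cong_sets[OF sets_M refl])

lemma sets_MM: "sets (M \<Otimes>\<^sub>M M) = sets (borel \<Otimes>\<^sub>M borel)"
  by (rule sets_pair_measure_cong[OF sets_M sets_M])

lemma meas_MM: "measurable (M \<Otimes>\<^sub>M M) N = measurable (borel \<Otimes>\<^sub>M borel) N"
  by (rule measurable_cong_sets[OF sets_MM refl])

lemma open_sets: "open U \<Longrightarrow> U \<in> sets M"
  using sets_M by simp

lemma closed_sets: "closed U \<Longrightarrow> U \<in> sets M"
  using sets_M by simp

lemma cball_sets[simp, measurable]: "cball x r \<in> sets M"
  by (rule closed_sets) simp

lemma cball_fin: "emeasure M (cball x r) < \<infinity>"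
  using radon proper by auto

lemma cball_fin': "emeasure M (cball x r) \<noteq> \<infinity>"
  using cball_fin[of x r] by (simp add: less_top)

lemma cball_emeasure: "emeasure M (cball x r) = ennreal (measure M (cball x r))"
  using cball_fin' by (intro emeasure_eq_ennreal_measure) auto

lemma cont_meas: "continuous_on UNIV f \<Longrightarrow> f \<in> borel_measurable M"
  unfolding meas_M by (rule borel_measurable_continuous_onI)

lemma ball_bound:
  assumes "r > 0"
  obtains C where "C \<ge> 0" "\<And>x. measure M (cball x r) \<le> C"
proof -
  obtain C where C: "\<And>x. emeasure M (cball x r) \<le> ennreal C" using balls_bdd assms by blast
  show ?thesis
  proof (rule that[of "max C 0"])
    fix x
    have "ennreal (measure M (cball x r)) \<le> ennreal C" using C[of x] by (simp add: cball_emeasure)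
    then show "measure M (cball x r) \<le> max C 0"
      by (cases "C \<ge> 0") (auto simp: ennreal_le_iff2)
  qed simp
qed

lemma sigma_finite: "sigma_finite_measure M"
proof
  fix x0 :: 'a
  let ?A = "range (\<lambda>n::nat. cball x0 (real n))"
  show "\<exists>A. countable A \<and> A \<subseteq> sets M \<and> \<Union> A = space M \<and> (\<forall>a\<in>A. emeasure M a \<noteq> \<infinity>)"
  proof (intro exI[of _ ?A] conjI)
    show "\<Union> ?A = space M"
    proof (auto)
      fix x :: 'a
      obtain n :: nat where "dist x0 x \<le> real n" using real_arch_simple by blast
      then show "\<exists>n::nat. dist x0 x \<le> real n" by blast
    qed
  qed (use cball_fin' in auto)
qed

lemma pair_sf: "pair_sigma_finite M M"
  using sigma_finite by (simp add: pair_sigma_finite_def)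

lemma dense_seq: "\<exists>D::nat \<Rightarrow> 'a. \<forall>x e. e > 0 \<longrightarrow> (\<exists>i. dist x (D i) < e)"
proof -
  fix x0 :: 'a
  have tb: "\<exists>k. finite k \<and> cball x0 (real n) \<subseteq> (\<Union>x\<in>k. ball x (1 / Suc m))" for n m :: nat
    using proper compact_eq_totally_bounded[of "cball x0 (real n)"] by auto
  define N where "N n m = (SOME k. finite k \<and> cball x0 (real n) \<subseteq> (\<Union>x\<in>k. ball x (1 / Suc m)))" for n m :: nat
  have N: "finite (N n m) \<and> cball x0 (real n) \<subseteq> (\<Union>x\<in>N n m. ball x (1 / Suc m))" for n m
    unfolding N_def by (rule someI_ex[OF tb])
  define U where "U = insert x0 (\<Union>n m. N n m)"
  have cU: "countable U" unfolding U_def by (intro countable_insert countable_UN countableI_type countable_finite) (use N in blast)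
  have neU: "U \<noteq> {}" unfolding U_def by simp
  define D where "D = from_nat_into U"
  have rD: "range D = U" unfolding D_def using cU neU by simp
  show ?thesis
  proof (intro exI[of _ D] allI impI)
    fix x :: 'a and e :: real assume e: "e > 0"
    obtain n :: nat where n: "dist x0 x \<le> real n" using real_arch_simple by blast
    obtain m :: nat where m: "1 / Suc m < e"
      using e by (metis nat_approx_posE)
    have "x \<in> cball x0 (real n)" using n by simp
    then obtain y where y: "y \<in> N n m" "dist y x < 1 / Suc m" using N[of n m] by auto
    have "y \<in> range D" using y rD unfolding U_def by auto
    then obtain i where "y = D i" by auto
    then have "dist x (D i) < e" using y m by (metis dist_commute less_trans)
    then show "\<exists>i. dist x (D i) < e" by blast
  qed
qed

lemma cont_meas2:
  fixes g :: "'a \<times> 'a \<Rightarrow> 'b::metric_space"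
  assumes g: "continuous_on UNIV g"
  shows "g \<in> borel_measurable (M \<Otimes>\<^sub>M M)"
proof -
  obtain D :: "nat \<Rightarrow> 'a" where D: "\<And>x e. e > 0 \<Longrightarrow> \<exists>i. dist x (D i) < e"
    using dense_seq by blast
  define idx where "idx m x = (LEAST i. dist x (D i) < 1 / Suc m)" for m :: nat and x
  have idx_meas: "idx m \<in> measurable M (count_space UNIV)" for m
    unfolding idx_def
  proof (rule measurable_Least)
    fix i
    have "{x \<in> space M. dist x (D i) < 1 / Suc m} = ball (D i) (1 / Suc m)"
      by (auto simp: dist_commute)
    then show "(\<lambda>x. dist x (D i) < 1 / Suc m) \<in> measurable M (count_space UNIV)"
      using open_sets[of "ball (D i) (1 / Suc m)"] by (simp add: pred_def)
  qed
  have idx_dist: "dist x (D (idx m x)) < 1 / Suc m" for m x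
    unfolding idx_def by (rule LeastI_ex) (rule D, simp)
  define gm where "gm m p = g (D (idx m (fst p)), D (idx m (snd p)))" for m p
  have gm_meas: "gm m \<in> borel_measurable (M \<Otimes>\<^sub>M M)" for m
  proof -
    have i1: "(\<lambda>p. idx m (fst p)) \<in> measurable (M \<Otimes>\<^sub>M M) (count_space UNIV)"
      by (rule measurable_compose[OF measurable_fst idx_meas])
    have i2: "(\<lambda>p. idx m (snd p)) \<in> measurable (M \<Otimes>\<^sub>M M) (count_space UNIV)"
      by (rule measurable_compose[OF measurable_snd idx_meas])
    have "(\<lambda>p. g (D i, D (idx m (snd p)))) \<in> borel_measurable (M \<Otimes>\<^sub>M M)" for i
      by (rule measurable_compose_countable[where g="\<lambda>p. idx m (snd p)" and f="\<lambda>j p. g (D i, D j)", OF _ i2]) simp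
    then show ?thesis unfolding gm_def
      by (intro measurable_compose_countable[where g="\<lambda>p. idx m (fst p)" and f="\<lambda>i p. g (D i, D (idx m (snd p)))", OF _ i1])
  qed
  show ?thesis
  proof (rule borel_measurable_LIMSEQ_metric[OF gm_meas])
    fix p :: "'a \<times> 'a"
    have conv: "(\<lambda>m. D (idx m x)) \<longlonglongrightarrow> x" for x
    proof -
      have "(\<lambda>m. dist (D (idx m x)) x) \<longlonglongrightarrow> 0"
      proof (rule tendsto_sandwich[of "\<lambda>_. 0" _ _ "\<lambda>m. 1 / Suc m"])
        show "\<forall>\<^sub>F m in sequentially. 0 \<le> dist (D (idx m x)) x" by simp
        show "\<forall>\<^sub>F m in sequentially. dist (D (idx m x)) x \<le> 1 / Suc m"
          using idx_dist by (simp add: dist_commute less_imp_le)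
        show "(\<lambda>m. 1 / real (Suc m)) \<longlonglongrightarrow> 0" by (rule LIMSEQ_inverse_real_of_nat[unfolded inverse_eq_divide])
      qed simp
      then show ?thesis using tendsto_dist_iff by blast
    qed
    have "(\<lambda>m. (D (idx m (fst p)), D (idx m (snd p)))) \<longlonglongrightarrow> (fst p, snd p)"
      by (intro tendsto_Pair conv)
    moreover have "isCont g p" using g by (cases p) (simp add: continuous_on_eq_continuous_at)
    ultimately show "(\<lambda>m. gm m p) \<longlonglongrightarrow> g p"
      unfolding gm_def by (metis isCont_tendsto_compose prod.collapse)
  qed
qed

end

definition kb :: "('a::metric_space \<times> 'a \<Rightarrow> complex) \<Rightarrow> real \<Rightarrow> real \<Rightarrow> bool" where
  "kb k B s \<longleftrightarrow> continuous_on UNIV k \<and> B \<ge> 0 \<and> s > 0 \<and> (\<forall>p. cmod (k p) \<le> B) \<and>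
     (\<forall>x y. s < dist x y \<longrightarrow> k (x, y) = 0)"

lemma kbD:
  assumes "kb k B s"
  shows "continuous_on UNIV k" "B \<ge> 0" "s > 0" "\<And>p. cmod (k p) \<le> B" "\<And>x y. s < dist x y \<Longrightarrow> k (x, y) = 0"
  using assms unfolding kb_def by auto

lemma good_kernel_kb:
  assumes "good_kernel k"
  obtains B s where "kb k B s"
proof -
  from assms have b: "bounded (range k)" and uc: "uniformly_continuous_on UNIV k" and c: "controlled k"
    by (auto simp: good_kernel_def)
  obtain B where B: "\<And>p. cmod (k p) \<le> B" using b by (auto simp: bounded_iff)
  obtain r where r: "\<And>x y. dist x y > r \<Longrightarrow> k (x, y) = 0" using c by (auto simp: controlled_def)
  show ?thesis
  proof (rule that[of "max B 0" "max r 1"])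
    show "kb k (max B 0) (max r 1)"
      unfolding kb_def using B r uniformly_continuous_imp_continuous[OF uc]
      by (auto simp: le_max_iff_disj)
  qed
qed

lemma t_le_1_sq: "(t::real) \<ge> 0 \<Longrightarrow> t \<le> 1 + t\<^sup>2"
proof -
  assume "t \<ge> 0"
  have "0 \<le> (t - 1)\<^sup>2" by simp
  then have "2 * t \<le> t\<^sup>2 + 1" by (simp add: power2_diff)
  then show ?thesis using \<open>t \<ge> 0\<close> by linarith
qed

context ctx
begin

lemma cont_meas_y:
  assumes "continuous_on UNIV k"
  shows "(\<lambda>y. k (x, y)) \<in> borel_measurable M"
proof (rule cont_meas)
  show "continuous_on UNIV (\<lambda>y. k (x, y))"
    by (rule continuous_on_compose2[OF assms]) (auto intro!: continuous_intros)
qed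

lemma cont_meas_x:
  assumes "continuous_on UNIV k"
  shows "(\<lambda>x. k (x, y)) \<in> borel_measurable M"
proof (rule cont_meas)
  show "continuous_on UNIV (\<lambda>x. k (x, y))"
    by (rule continuous_on_compose2[OF assms]) (auto intro!: continuous_intros)
qed

lemma int_supp:
  fixes h :: "'a \<Rightarrow> 'b::{banach, second_countable_topology}"
  assumes h: "h \<in> borel_measurable M" and b: "\<And>z. norm (h z) \<le> c * indicator (cball a r) z"
  shows "integrable M h" "norm (\<integral>z. h z \<partial>M) \<le> c * measure M (cball a r)"
proof -
  have ii: "integrable M (\<lambda>z. c * indicator (cball a r) z :: real)"
    using cball_fin by (intro integrable_mult_right integrable_real_indicator) auto
  show i: "integrable M h"
  proof (rule Bochner_Integration.integrable_bound[OF ii h])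
    show "AE x in M. norm (h x) \<le> norm (c * indicator (cball a r) x)"
      using b by (intro AE_I2) (auto intro: order_trans[OF _ abs_ge_self])
  qed
  have "norm (\<integral>z. h z \<partial>M) \<le> (\<integral>z. norm (h z) \<partial>M)" by (rule integral_norm_bound)
  also have "\<dots> \<le> (\<integral>z. c * indicator (cball a r) z \<partial>M)"
    by (rule integral_mono[OF integrable_norm[OF i] ii b])
  also have "\<dots> = c * measure M (cball a r)" by simp
  finally show "norm (\<integral>z. h z \<partial>M) \<le> c * measure M (cball a r)" .
qed

lemma int_supp_L2:
  fixes h :: "'a \<Rightarrow> 'b::{banach, second_countable_topology}"
  assumes f: "f \<in> L2 M" and h: "h \<in> borel_measurable M" and c: "c \<ge> 0"
    and b: "\<And>z. norm (h z) \<le> c * indicator (cball a r) z * cmod (f z)"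
  shows "integrable M h"
proof -
  have ii: "integrable M (\<lambda>z. c * indicator (cball a r) z + c * (cmod (f z))\<^sup>2 :: real)"
    by (intro Bochner_Integration.integrable_add integrable_mult_right integrable_real_indicator L2_int[OF f]) (use cball_fin in auto)
  show ?thesis
  proof (rule Bochner_Integration.integrable_bound[OF ii h])
    show "AE x in M. norm (h x) \<le> norm (c * indicator (cball a r) x + c * (cmod (f x))\<^sup>2)"
    proof (rule AE_I2)
      fix x
      have "indicator (cball a r) x * cmod (f x) \<le> indicator (cball a r) x + (cmod (f x))\<^sup>2"
        using t_le_1_sq[of "cmod (f x)"] by (auto simp: indicator_def)
      then have "c * indicator (cball a r) x * cmod (f x) \<le> c * indicator (cball a r) x + c * (cmod (f x))\<^sup>2"
        using c by (metis distrib_left mult.assoc mult_left_mono)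
      also have "\<dots> \<le> norm (c * indicator (cball a r) x + c * (cmod (f x))\<^sup>2)" by simp
      finally show "norm (h x) \<le> norm (c * indicator (cball a r) x + c * (cmod (f x))\<^sup>2)"
        using b[of x] by linarith
    qed
  qed
qed

lemma kernel_int:
  assumes k: "kb k B s" and f: "f \<in> L2 M"
  shows "integrable M (\<lambda>y. k (x, y) * f y)"
proof (rule int_supp_L2[OF f, where c=B and a=x and r=s])
  show "(\<lambda>y. k (x, y) * f y) \<in> borel_measurable M"
    by (rule borel_measurable_times[OF cont_meas_y[OF kbD(1)[OF k]] L2_meas[OF f]])
  show "0 \<le> B" using kbD(2)[OF k] .
  fix z
  show "norm (k (x, z) * f z) \<le> B * indicator (cball x s) z * cmod (f z)"
  proof (cases "z \<in> cball x s")
    case True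
    then show ?thesis using kbD(4)[OF k, of "(x, z)"] by (simp add: norm_mult mult_right_mono)
  next
    case False
    then show ?thesis using kbD(5)[OF k, of x z] by simp
  qed
qed

lemma kernel_meas_pair:
  assumes k: "kb k B s" and f: "f \<in> L2 M"
  shows "(\<lambda>p. k p * f (snd p)) \<in> borel_measurable (M \<Otimes>\<^sub>M M)"
  using cont_meas2[OF kbD(1)[OF k]] L2_meas[OF f] by measurable

lemma kernel_op_meas:
  assumes k: "kb k B s" and f: "f \<in> L2 M"
  shows "op_kernel M k f \<in> borel_measurable M"
proof -
  have "case_prod (\<lambda>x y. k (x, y) * f y) \<in> borel_measurable (M \<Otimes>\<^sub>M M)"
    using kernel_meas_pair[OF k f] by (simp add: split_beta')
  then show ?thesis unfolding op_kernel_def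
    by (rule sigma_finite_measure.borel_measurable_lebesgue_integral[OF sigma_finite])
qed

lemma kernel_add:
  assumes k: "kb k B s" and f: "f \<in> L2 M" and g: "g \<in> L2 M"
  shows "op_kernel M k (\<lambda>y. f y + g y) x = op_kernel M k f x + op_kernel M k g x"
  unfolding op_kernel_def distrib_left
  by (rule Bochner_Integration.integral_add[OF kernel_int[OF k f] kernel_int[OF k g]])

lemma kernel_diff:
  assumes k: "kb k B s" and f: "f \<in> L2 M" and g: "g \<in> L2 M"
  shows "op_kernel M k (\<lambda>y. f y - g y) x = op_kernel M k f x - op_kernel M k g x"
  unfolding op_kernel_def right_diff_distrib
  by (rule Bochner_Integration.integral_diff[OF kernel_int[OF k f] kernel_int[OF k g]])

lemma kernel_scale:
  "op_kernel M k (\<lambda>y. c * f y) x = c * op_kernel M k f x"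
proof -
  have "(\<lambda>y. k (x, y) * (c * f y)) = (\<lambda>y. c * (k (x, y) * f y))" by (simp add: ac_simps)
  then show ?thesis unfolding op_kernel_def by simp
qed

lemma kernel_ae:
  assumes k: "kb k B s" and f: "f \<in> L2 M" and g: "g \<in> L2 M" and ae: "AE x in M. f x = g x"
  shows "op_kernel M k f x = op_kernel M k g x"
  unfolding op_kernel_def
proof (rule integral_cong_AE)
  show "(\<lambda>y. k (x, y) * f y) \<in> borel_measurable M"
    by (rule borel_measurable_times[OF cont_meas_y[OF kbD(1)[OF k]] L2_meas[OF f]])
  show "(\<lambda>y. k (x, y) * g y) \<in> borel_measurable M"
    by (rule borel_measurable_times[OF cont_meas_y[OF kbD(1)[OF k]] L2_meas[OF g]])
  show "AE y in M. k (x, y) * f y = k (x, y) * g y" using ae by eventually_elim simp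
qed

end

context ctx
begin

lemma dist_meas2: "(\<lambda>p. dist (fst p) (snd p)) \<in> borel_measurable (M \<Otimes>\<^sub>M M)"
  by (rule cont_meas2) (intro continuous_intros)

lemma schur:
  assumes k: "kb k B s" and f: "f \<in> L2 M" and C: "C \<ge> 0" "\<And>x. measure M (cball x s) \<le> C"
  shows "op_kernel M k f \<in> L2 M \<and> l2norm M (op_kernel M k f) \<le> B * C * l2norm M f"
proof -
  have B0: "B \<ge> 0" using kbD(2)[OF k] .
  define F where "F y = (cmod (f y))\<^sup>2" for y
  have Fm: "F \<in> borel_measurable M" unfolding F_def using L2_meas[OF f] by measurable
  have Fi: "integrable M F" unfolding F_def using L2_int[OF f] .
  have F0: "\<And>y. F y \<ge> 0" by (simp add: F_def)
  define ind where "ind x y = (indicator (cball x s) y :: real)" for x y :: 'a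
  have ind01: "ind x y = 0 \<or> ind x y = 1" for x y by (auto simp: ind_def indicator_def)
  have ind_m: "(\<lambda>y. ind x y) \<in> borel_measurable M" for x
    unfolding ind_def by (rule borel_measurable_indicator) simp
  define J where "J x = (\<integral>y. ind x y * F y \<partial>M)" for x
  have indF_int: "integrable M (\<lambda>y. ind x y * F y)" for x
  proof (rule Bochner_Integration.integrable_bound[OF Fi])
    show "(\<lambda>y. ind x y * F y) \<in> borel_measurable M" by (rule borel_measurable_times[OF ind_m Fm])
    show "AE y in M. norm (ind x y * F y) \<le> norm (F y)"
      by (intro AE_I2) (use ind01[of x] F0 in \<open>auto simp: ind_def indicator_def\<close>)
  qed
  have J0: "J x \<ge> 0" for x
    unfolding J_def using F0 by (intro integral_nonneg_AE) (auto simp: ind_def)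
  have pw: "(cmod (op_kernel M k f x))\<^sup>2 \<le> B\<^sup>2 * C * J x" for x
  proof -
    define a where "a = (\<integral>y. ind x y * cmod (f y) \<partial>M)"
    have fm: "(\<lambda>y. cmod (f y)) \<in> borel_measurable M" using L2_meas[OF f] by measurable
    have ai: "integrable M (\<lambda>y. ind x y * cmod (f y))"
    proof (rule int_supp_L2[OF f, where c=1 and a=x and r=s])
      show "(\<lambda>y. ind x y * cmod (f y)) \<in> borel_measurable M" by (rule borel_measurable_times[OF ind_m fm])
    qed (auto simp: ind_def indicator_def)
    have "cmod (op_kernel M k f x) \<le> (\<integral>y. cmod (k (x, y) * f y) \<partial>M)"
      unfolding op_kernel_def by (rule integral_norm_bound)
    also have "\<dots> \<le> (\<integral>y. B * (ind x y * cmod (f y)) \<partial>M)"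
    proof (rule integral_mono[OF integrable_norm[OF kernel_int[OF k f]]])
      show "integrable M (\<lambda>y. B * (ind x y * cmod (f y)))" using ai by simp
      fix y
      show "cmod (k (x, y) * f y) \<le> B * (ind x y * cmod (f y))"
      proof (cases "y \<in> cball x s")
        case True
        then show ?thesis using kbD(4)[OF k, of "(x, y)"] by (simp add: ind_def norm_mult mult_right_mono)
      next
        case False
        then show ?thesis using kbD(5)[OF k, of x y] by (simp add: ind_def)
      qed
    qed
    also have "\<dots> = B * a" by (simp add: a_def)
    finally have Ka: "cmod (op_kernel M k f x) \<le> B * a" .
    have sq1: "integrable M (\<lambda>y. (ind x y)\<^sup>2)"
    proof -
      have "(\<lambda>y. (ind x y)\<^sup>2) = (\<lambda>y. indicator (cball x s) y :: real)"
        using ind01[of x] by (auto simp: fun_eq_iff ind_def indicator_def)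
      then show ?thesis using cball_fin by (simp add: integrable_real_indicator)
    qed
    have e3: "(\<lambda>y. (ind x y * cmod (f y))\<^sup>2) = (\<lambda>y. ind x y * F y)"
      by (auto simp: fun_eq_iff ind_def indicator_def F_def)
    have sq2: "integrable M (\<lambda>y. (ind x y * cmod (f y))\<^sup>2)"
      unfolding e3 by (rule indF_int)
    have cs: "(\<integral>y. \<bar>ind x y * (ind x y * cmod (f y))\<bar> \<partial>M) \<le>
        sqrt (\<integral>y. (ind x y)\<^sup>2 \<partial>M) * sqrt (\<integral>y. (ind x y * cmod (f y))\<^sup>2 \<partial>M)"
      by (rule cauchy_schwarz_int(2)[OF ind_m borel_measurable_times[OF ind_m fm] sq1 sq2])
    have e1: "(\<lambda>y. \<bar>ind x y * (ind x y * cmod (f y))\<bar>) = (\<lambda>y. ind x y * cmod (f y))"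
      by (auto simp: fun_eq_iff ind_def indicator_def)
    have e2: "(\<integral>y. (ind x y)\<^sup>2 \<partial>M) = measure M (cball x s)"
    proof -
      have "(\<lambda>y. (ind x y)\<^sup>2) = (\<lambda>y. indicator (cball x s) y :: real)"
        using ind01[of x] by (auto simp: fun_eq_iff ind_def indicator_def)
      then show ?thesis by simp
    qed
    have aJ: "a \<le> sqrt (measure M (cball x s)) * sqrt (J x)"
      using cs unfolding e1 e2 e3 by (simp add: a_def J_def)
    have a0: "a \<ge> 0" unfolding a_def by (intro integral_nonneg_AE) (auto simp: ind_def)
    have "a\<^sup>2 \<le> (sqrt (measure M (cball x s)) * sqrt (J x))\<^sup>2"
      using aJ a0 by (simp add: power_mono)
    also have "\<dots> = measure M (cball x s) * J x"
      using J0[of x] by (simp add: power_mult_distrib)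
    also have "\<dots> \<le> C * J x" using C(2)[of x] J0[of x] by (simp add: mult_right_mono)
    finally have a2: "a\<^sup>2 \<le> C * J x" .
    have "(cmod (op_kernel M k f x))\<^sup>2 \<le> (B * a)\<^sup>2" using Ka by (simp add: power_mono)
    also have "\<dots> = B\<^sup>2 * a\<^sup>2" by (simp add: power_mult_distrib)
    also have "\<dots> \<le> B\<^sup>2 * (C * J x)" using a2 by (simp add: mult_left_mono)
    finally show ?thesis by (simp add: mult.assoc)
  qed
  have indeq: "ind x y = indicator {..s} (dist x y)" for x y
    by (auto simp: ind_def indicator_def)
  have g_meas: "(\<lambda>p. ind (fst p) (snd p) * F (snd p)) \<in> borel_measurable (M \<Otimes>\<^sub>M M)"
  proof -
    have "(\<lambda>p. indicator {..s} (dist (fst p) (snd p)) :: real) \<in> borel_measurable (M \<Otimes>\<^sub>M M)"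
      by (rule measurable_compose[OF dist_meas2 borel_measurable_indicator]) simp
    moreover have "(\<lambda>p. F (snd p)) \<in> borel_measurable (M \<Otimes>\<^sub>M M)"
      by (rule measurable_compose[OF measurable_snd Fm])
    ultimately show ?thesis unfolding indeq by (rule borel_measurable_times)
  qed
  have Jm: "J \<in> borel_measurable M"
  proof -
    have "case_prod (\<lambda>x y. ind x y * F y) \<in> borel_measurable (M \<Otimes>\<^sub>M M)"
      using g_meas by (simp add: split_beta')
    then show ?thesis unfolding J_def[abs_def]
      by (rule sigma_finite_measure.borel_measurable_lebesgue_integral[OF sigma_finite])
  qed
  have gnn_meas: "case_prod (\<lambda>x y. ennreal (ind x y * F y)) \<in> borel_measurable (M \<Otimes>\<^sub>M M)"
  proof -
    have "(\<lambda>p. ennreal (ind (fst p) (snd p) * F (snd p))) \<in> borel_measurable (M \<Otimes>\<^sub>M M)"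
      by (rule measurable_compose[OF g_meas measurable_ennreal])
    then show ?thesis by (simp add: split_beta')
  qed
  have "(\<integral>\<^sup>+x. ennreal (J x) \<partial>M) = (\<integral>\<^sup>+x. (\<integral>\<^sup>+y. ennreal (ind x y * F y) \<partial>M) \<partial>M)"
  proof (rule nn_integral_cong)
    fix x
    show "ennreal (J x) = (\<integral>\<^sup>+y. ennreal (ind x y * F y) \<partial>M)"
      unfolding J_def using F0
      by (intro nn_integral_eq_integral[symmetric] indF_int) (auto simp: ind_def)
  qed
  also have "\<dots> = (\<integral>\<^sup>+y. (\<integral>\<^sup>+x. ennreal (ind x y * F y) \<partial>M) \<partial>M)"
    by (rule pair_sigma_finite.Fubini'[OF pair_sf gnn_meas, symmetric])
  also have "\<dots> = (\<integral>\<^sup>+y. ennreal (F y) * emeasure M (cball y s) \<partial>M)"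
  proof (rule nn_integral_cong)
    fix y
    have "(\<lambda>x. ennreal (ind x y * F y)) = (\<lambda>x. ennreal (F y) * indicator (cball y s) x)"
      by (auto simp: fun_eq_iff ind_def indicator_def dist_commute)
    then show "(\<integral>\<^sup>+x. ennreal (ind x y * F y) \<partial>M) = ennreal (F y) * emeasure M (cball y s)"
      by (simp add: nn_integral_cmult_indicator)
  qed
  also have "\<dots> \<le> (\<integral>\<^sup>+y. ennreal (F y) * ennreal C \<partial>M)"
  proof (rule nn_integral_mono)
    fix y
    have "emeasure M (cball y s) \<le> ennreal C"
      using C(2)[of y] by (simp add: cball_emeasure ennreal_leI)
    then show "ennreal (F y) * emeasure M (cball y s) \<le> ennreal (F y) * ennreal C"
      by (rule mult_left_mono) simp
  qed
  also have "\<dots> = (\<integral>\<^sup>+y. ennreal (F y) \<partial>M) * ennreal C"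
    by (rule nn_integral_multc) (use Fm in measurable)
  also have "\<dots> = ennreal ((\<integral>y. F y \<partial>M) * C)"
    using Fi F0 C(1) by (simp add: nn_integral_eq_integral ennreal_mult integral_nonneg_AE)
  finally have Jnn: "(\<integral>\<^sup>+x. ennreal (J x) \<partial>M) \<le> ennreal ((\<integral>y. F y \<partial>M) * C)" .
  have Ji: "integrable M J"
    by (rule integrableI_nonneg[OF Jm]) (use J0 Jnn in \<open>auto intro: le_less_trans\<close>)
  have "ennreal (\<integral>x. J x \<partial>M) \<le> ennreal ((\<integral>y. F y \<partial>M) * C)"
    using Jnn nn_integral_eq_integral[OF Ji] J0 by simp
  then have intJ: "(\<integral>x. J x \<partial>M) \<le> (\<integral>y. F y \<partial>M) * C"
    using Fi F0 C(1) by (subst (asm) ennreal_le_iff) (auto intro: integral_nonneg_AE)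
  have Km: "op_kernel M k f \<in> borel_measurable M" by (rule kernel_op_meas[OF k f])
  have K2i: "integrable M (\<lambda>x. (cmod (op_kernel M k f x))\<^sup>2)"
  proof (rule Bochner_Integration.integrable_bound[of M "\<lambda>x. B\<^sup>2 * C * J x"])
    show "integrable M (\<lambda>x. B\<^sup>2 * C * J x)" using Ji by simp
    show "(\<lambda>x. (cmod (op_kernel M k f x))\<^sup>2) \<in> borel_measurable M" using Km by measurable
    show "AE x in M. norm ((cmod (op_kernel M k f x))\<^sup>2) \<le> norm (B\<^sup>2 * C * J x)"
      using pw by (intro AE_I2) (auto intro: order_trans[OF _ abs_ge_self])
  qed
  have L2K: "op_kernel M k f \<in> L2 M" by (rule L2I[OF Km K2i])
  have "(l2norm M (op_kernel M k f))\<^sup>2 = (\<integral>x. (cmod (op_kernel M k f x))\<^sup>2 \<partial>M)" by (rule l2norm_sq)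
  also have "\<dots> \<le> (\<integral>x. B\<^sup>2 * C * J x \<partial>M)"
    by (rule integral_mono[OF K2i]) (use Ji pw in auto)
  also have "\<dots> = B\<^sup>2 * C * (\<integral>x. J x \<partial>M)" by simp
  also have "\<dots> \<le> B\<^sup>2 * C * ((\<integral>y. F y \<partial>M) * C)"
    using intJ C(1) by (intro mult_left_mono) auto
  also have "\<dots> = (B * C * l2norm M f)\<^sup>2"
  proof -
    have "(\<integral>y. F y \<partial>M) = (l2norm M f)\<^sup>2" by (simp add: l2norm_sq F_def)
    then show ?thesis by (simp add: power_mult_distrib power2_eq_square)
  qed
  finally have "(l2norm M (op_kernel M k f))\<^sup>2 \<le> (B * C * l2norm M f)\<^sup>2" .
  moreover have "0 \<le> B * C * l2norm M f"
    using B0 C(1) l2norm_nonneg[of M f] by simp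
  ultimately have "l2norm M (op_kernel M k f) \<le> B * C * l2norm M f"
    by (rule power2_le_imp_le)
  with L2K show ?thesis by simp
qed

lemma kernel_bounded_op:
  assumes k: "kb k B s"
  shows "bounded_op M (op_kernel M k)"
proof -
  obtain C where C: "C \<ge> 0" "\<And>x. measure M (cball x s) \<le> C"
    using ball_bound[OF kbD(3)[OF k]] by blast
  show ?thesis
  proof (rule bounded_opI[where C="B * C"])
    fix f assume f: "f \<in> L2 M"
    show "op_kernel M k f \<in> L2 M" using schur[OF k f C] by simp
    show "l2norm M (op_kernel M k f) \<le> B * C * l2norm M f" using schur[OF k f C] by simp
    fix c show "AE x in M. op_kernel M k (\<lambda>y. c * f y) x = c * op_kernel M k f x"
      by (simp add: kernel_scale)
  next
    fix f g assume f: "f \<in> L2 M" and g: "g \<in> L2 M"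
    show "AE x in M. op_kernel M k (\<lambda>y. f y + g y) x = op_kernel M k f x + op_kernel M k g x"
      by (simp add: kernel_add[OF k f g])
    assume ae: "AE x in M. f x = g x"
    show "AE x in M. op_kernel M k f x = op_kernel M k g x"
      by (simp add: kernel_ae[OF k f g ae])
  qed
qed

end

definition kcomp :: "'a::metric_space measure \<Rightarrow> ('a \<times> 'a \<Rightarrow> complex) \<Rightarrow> ('a \<times> 'a \<Rightarrow> complex) \<Rightarrow> ('a \<times> 'a \<Rightarrow> complex)" where
  "kcomp M k1 k2 = (\<lambda>(x, y). \<integral>z. k1 (x, z) * k2 (z, y) \<partial>M)"

context ctx
begin

lemma kcomp_int:
  assumes k1: "kb k1 B1 s1" and k2: "kb k2 B2 s2"
  shows "integrable M (\<lambda>z. k1 (x, z) * k2 (z, y))"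
    and "cmod (kcomp M k1 k2 (x, y)) \<le> B1 * B2 * measure M (cball x s1)"
proof -
  have m: "(\<lambda>z. k1 (x, z) * k2 (z, y)) \<in> borel_measurable M"
    by (rule borel_measurable_times[OF cont_meas_y[OF kbD(1)[OF k1]] cont_meas_x[OF kbD(1)[OF k2]]])
  have b: "norm (k1 (x, z) * k2 (z, y)) \<le> B1 * B2 * indicator (cball x s1) z" for z
  proof (cases "z \<in> cball x s1")
    case True
    then show ?thesis using kbD(4)[OF k1, of "(x, z)"] kbD(4)[OF k2, of "(z, y)"] kbD(2)[OF k1]
      by (simp add: norm_mult mult_mono)
  next
    case False
    then show ?thesis using kbD(5)[OF k1, of x z] by simp
  qed
  note r = int_supp[OF m b]
  show "integrable M (\<lambda>z. k1 (x, z) * k2 (z, y))" using r(1) .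
  show "cmod (kcomp M k1 k2 (x, y)) \<le> B1 * B2 * measure M (cball x s1)"
    using r(2) by (simp add: kcomp_def)
qed

lemma kcomp_controlled:
  assumes k1: "kb k1 B1 s1" and k2: "kb k2 B2 s2" and d: "s1 + s2 < dist x y"
  shows "kcomp M k1 k2 (x, y) = 0"
proof -
  have "k1 (x, z) * k2 (z, y) = 0" for z
  proof (cases "dist x z \<le> s1")
    case True
    then have "s2 < dist z y" using d dist_triangle[of x y z] by linarith
    then show ?thesis using kbD(5)[OF k2] by simp
  next
    case False
    then show ?thesis using kbD(5)[OF k1] by simp
  qed
  then have "(\<lambda>z. k1 (x, z) * k2 (z, y)) = (\<lambda>z. 0)" by (simp add: fun_eq_iff)
  then show ?thesis by (simp add: kcomp_def)
qed

lemma kcomp_uc: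
  assumes k1: "kb k1 B1 s1" and k2: "kb k2 B2 s2"
    and u1: "uniformly_continuous_on UNIV k1" and u2: "uniformly_continuous_on UNIV k2"
  shows "uniformly_continuous_on UNIV (kcomp M k1 k2)"
  unfolding uniformly_continuous_on_def
proof (intro allI impI)
  fix e :: real assume e: "e > 0"
  obtain C1 where C1: "C1 \<ge> 0" "\<And>x. measure M (cball x s1) \<le> C1"
    using ball_bound[OF kbD(3)[OF k1]] by blast
  obtain C2 where C2: "C2 \<ge> 0" "\<And>x. measure M (cball x s2) \<le> C2"
    using ball_bound[OF kbD(3)[OF k2]] by blast
  have B1: "B1 \<ge> 0" and B2: "B2 \<ge> 0" using kbD(2)[OF k1] kbD(2)[OF k2] by auto
  define K where "K = B2 * C2 + B1 * C1 + 1"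
  have K: "K > 0" using B1 B2 C1 C2 by (simp add: K_def add_nonneg_pos)
  define \<eta> where "\<eta> = e / (2 * K)"
  have \<eta>: "\<eta> > 0" using e K by (simp add: \<eta>_def)
  obtain d1 where d1: "d1 > 0" "\<And>p p'. dist p' p < d1 \<Longrightarrow> dist (k1 p') (k1 p) < \<eta>"
    using u1[unfolded uniformly_continuous_on_def, rule_format, OF \<eta>] by auto
  obtain d2 where d2: "d2 > 0" "\<And>p p'. dist p' p < d2 \<Longrightarrow> dist (k2 p') (k2 p) < \<eta>"
    using u2[unfolded uniformly_continuous_on_def, rule_format, OF \<eta>] by auto
  show "\<exists>d>0. \<forall>p\<in>UNIV. \<forall>p'\<in>UNIV. dist p' p < d \<longrightarrow> dist (kcomp M k1 k2 p') (kcomp M k1 k2 p) < e"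
  proof (intro exI[of _ "min d1 d2"] conjI ballI impI)
    show "min d1 d2 > 0" using d1 d2 by simp
    fix p p' :: "'a \<times> 'a" assume dp: "dist p' p < min d1 d2"
    obtain x y where p: "p = (x, y)" by (cases p)
    obtain x' y' where p': "p' = (x', y')" by (cases p')
    have dx: "dist x' x < d1" using dp dist_fst_le[of p' p] p p' by simp
    have dy: "dist y' y < d2" using dp dist_snd_le[of p' p] p p' by simp
    have k1d: "cmod (k1 (x', z) - k1 (x, z)) < \<eta>" for z
    proof -
      have "dist (x', z) (x, z) < d1" using dx by (simp add: dist_Pair_Pair)
      then have "dist (k1 (x', z)) (k1 (x, z)) < \<eta>" by (rule d1(2))
      then show ?thesis by (simp add: dist_norm)
    qed
    have k2d: "cmod (k2 (z, y') - k2 (z, y)) < \<eta>" for z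
    proof -
      have "dist (z, y') (z, y) < d2" using dy by (simp add: dist_Pair_Pair)
      then have "dist (k2 (z, y')) (k2 (z, y)) < \<eta>" by (rule d2(2))
      then show ?thesis by (simp add: dist_norm)
    qed
    note i1 = kcomp_int(1)[OF k1 k2, of x' y'] and i2 = kcomp_int(1)[OF k1 k2, of x y']
      and i3 = kcomp_int(1)[OF k1 k2, of x y]
    have m1: "(\<lambda>z. (k1 (x', z) - k1 (x, z)) * k2 (z, y')) \<in> borel_measurable M"
      using cont_meas_y[OF kbD(1)[OF k1]] cont_meas_x[OF kbD(1)[OF k2]]
      by (intro borel_measurable_times borel_measurable_diff)
    have b1: "norm ((k1 (x', z) - k1 (x, z)) * k2 (z, y')) \<le> \<eta> * B2 * indicator (cball y' s2) z" for z
    proof (cases "z \<in> cball y' s2")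
      case True
      then show ?thesis using k1d[of z] kbD(4)[OF k2, of "(z, y')"] B2 \<eta>
        by (simp add: norm_mult) (intro mult_mono, auto)
    next
      case False
      then show ?thesis using kbD(5)[OF k2, of z y'] by (simp add: dist_commute)
    qed
    have m2: "(\<lambda>z. k1 (x, z) * (k2 (z, y') - k2 (z, y))) \<in> borel_measurable M"
      using cont_meas_y[OF kbD(1)[OF k1]] cont_meas_x[OF kbD(1)[OF k2]]
      by (intro borel_measurable_times borel_measurable_diff)
    have b2: "norm (k1 (x, z) * (k2 (z, y') - k2 (z, y))) \<le> B1 * \<eta> * indicator (cball x s1) z" for z
    proof (cases "z \<in> cball x s1")
      case True
      then show ?thesis using k2d[of z] kbD(4)[OF k1, of "(x, z)"] B1 \<eta>
        by (simp add: norm_mult) (intro mult_mono, auto)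
    next
      case False
      then show ?thesis using kbD(5)[OF k1, of x z] by simp
    qed
    have eq1: "kcomp M k1 k2 (x', y') - kcomp M k1 k2 (x, y') = (\<integral>z. (k1 (x', z) - k1 (x, z)) * k2 (z, y') \<partial>M)"
      unfolding kcomp_def using i1 i2 by (simp add: left_diff_distrib Bochner_Integration.integral_diff)
    have eq2: "kcomp M k1 k2 (x, y') - kcomp M k1 k2 (x, y) = (\<integral>z. k1 (x, z) * (k2 (z, y') - k2 (z, y)) \<partial>M)"
      unfolding kcomp_def using i2 i3 by (simp add: right_diff_distrib Bochner_Integration.integral_diff)
    have n1: "cmod (kcomp M k1 k2 (x', y') - kcomp M k1 k2 (x, y')) \<le> \<eta> * B2 * C2"
    proof -
      have "cmod (kcomp M k1 k2 (x', y') - kcomp M k1 k2 (x, y')) \<le> \<eta> * B2 * measure M (cball y' s2)"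
        unfolding eq1 by (rule int_supp(2)[OF m1 b1])
      also have "\<dots> \<le> \<eta> * B2 * C2" using C2(2)[of y'] \<eta> B2 by (intro mult_left_mono) auto
      finally show ?thesis .
    qed
    have n2: "cmod (kcomp M k1 k2 (x, y') - kcomp M k1 k2 (x, y)) \<le> B1 * \<eta> * C1"
    proof -
      have "cmod (kcomp M k1 k2 (x, y') - kcomp M k1 k2 (x, y)) \<le> B1 * \<eta> * measure M (cball x s1)"
        unfolding eq2 by (rule int_supp(2)[OF m2 b2])
      also have "\<dots> \<le> B1 * \<eta> * C1" using C1(2)[of x] \<eta> B1 by (intro mult_left_mono) auto
      finally show ?thesis .
    qed
    have "dist (kcomp M k1 k2 p') (kcomp M k1 k2 p)
        \<le> cmod (kcomp M k1 k2 (x', y') - kcomp M k1 k2 (x, y')) + cmod (kcomp M k1 k2 (x, y') - kcomp M k1 k2 (x, y))"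
      unfolding p p' dist_norm by (rule norm_diff_triangle_le[OF order_refl order_refl])
    also have "\<dots> \<le> \<eta> * B2 * C2 + B1 * \<eta> * C1" using n1 n2 by simp
    also have "\<dots> = \<eta> * (K - 1)" by (simp add: K_def algebra_simps)
    also have "\<dots> < \<eta> * (2 * K)" using \<eta> K by simp
    also have "\<dots> = e" using K by (simp add: \<eta>_def)
    finally show "dist (kcomp M k1 k2 p') (kcomp M k1 k2 p) < e" .
  qed
qed

lemma kcomp_good:
  assumes g1: "good_kernel k1" and g2: "good_kernel k2" and k1: "kb k1 B1 s1" and k2: "kb k2 B2 s2"
  shows "good_kernel (kcomp M k1 k2)"
  unfolding good_kernel_def
proof (intro conjI)
  obtain C1 where C1: "C1 \<ge> 0" "\<And>x. measure M (cball x s1) \<le> C1"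
    using ball_bound[OF kbD(3)[OF k1]] by blast
  show "bounded (range (kcomp M k1 k2))"
    unfolding bounded_iff
  proof (intro exI[of _ "B1 * B2 * C1"] ballI)
    fix w assume "w \<in> range (kcomp M k1 k2)"
    then obtain x y where w: "w = kcomp M k1 k2 (x, y)" by auto
    have "cmod w \<le> B1 * B2 * measure M (cball x s1)" using kcomp_int(2)[OF k1 k2] w by simp
    also have "\<dots> \<le> B1 * B2 * C1" using C1(2)[of x] kbD(2)[OF k1] kbD(2)[OF k2]
      by (intro mult_left_mono) auto
    finally show "norm w \<le> B1 * B2 * C1" by simp
  qed
  show "uniformly_continuous_on UNIV (kcomp M k1 k2)"
    by (rule kcomp_uc[OF k1 k2]) (use g1 g2 in \<open>auto simp: good_kernel_def\<close>)
  show "controlled (kcomp M k1 k2)"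
    unfolding controlled_def using kcomp_controlled[OF k1 k2] by blast
qed

lemma integrable_prod:
  fixes g1 g2 :: "'a \<Rightarrow> real"
  assumes i1: "integrable M g1" and i2: "integrable M g2" and p1: "\<And>x. g1 x \<ge> 0" and p2: "\<And>x. g2 x \<ge> 0"
  shows "integrable (M \<Otimes>\<^sub>M M) (\<lambda>p. g1 (fst p) * g2 (snd p))"
proof -
  interpret sigma_finite_measure M by (rule sigma_finite)
  have m1: "g1 \<in> borel_measurable M" and m2: "g2 \<in> borel_measurable M" using i1 i2 by auto
  have m: "(\<lambda>p. g1 (fst p) * g2 (snd p)) \<in> borel_measurable (M \<Otimes>\<^sub>M M)"
    by (intro borel_measurable_times measurable_compose[OF measurable_fst m1] measurable_compose[OF measurable_snd m2])
  have "(\<integral>\<^sup>+p. ennreal (g1 (fst p) * g2 (snd p)) \<partial>(M \<Otimes>\<^sub>M M))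
      = (\<integral>\<^sup>+x. (\<integral>\<^sup>+y. ennreal (g1 (fst (x, y)) * g2 (snd (x, y))) \<partial>M) \<partial>M)"
    by (rule nn_integral_fst[symmetric]) (rule measurable_compose[OF m measurable_ennreal])
  also have "\<dots> = (\<integral>\<^sup>+x. ennreal (g1 x) * (\<integral>\<^sup>+y. ennreal (g2 y) \<partial>M) \<partial>M)"
    using p1 p2 m2 by (simp add: ennreal_mult nn_integral_cmult)
  also have "\<dots> = (\<integral>\<^sup>+x. ennreal (g1 x) \<partial>M) * (\<integral>\<^sup>+y. ennreal (g2 y) \<partial>M)"
    using m1 by (simp add: nn_integral_multc)
  also have "\<dots> = ennreal (integral\<^sup>L M g1) * ennreal (integral\<^sup>L M g2)"
    using i1 i2 p1 p2 by (simp add: nn_integral_eq_integral)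
  also have "\<dots> < \<infinity>" by (simp add: ennreal_mult_less_top)
  finally show ?thesis
    by (intro integrableI_nonneg[OF m]) (use p1 p2 in auto)
qed

lemma kcomp_op:
  assumes k1: "kb k1 B1 s1" and k2: "kb k2 B2 s2" and f: "f \<in> L2 M"
  shows "op_kernel M k1 (op_kernel M k2 f) x = op_kernel M (kcomp M k1 k2) f x"
proof -
  define G where "G z y = k1 (x, z) * k2 (z, y) * f y" for z y
  have B1: "B1 \<ge> 0" and B2: "B2 \<ge> 0" using kbD(2)[OF k1] kbD(2)[OF k2] by auto
  have fm: "(\<lambda>y. cmod (f y)) \<in> borel_measurable M" using L2_meas[OF f] by measurable
  define g1 where "g1 z = B1 * B2 * indicator (cball x s1) z" for z :: 'a
  define g2 where "g2 y = indicator (cball x (s1 + s2)) y * cmod (f y)" for y :: 'a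
  have g1i: "integrable M g1" unfolding g1_def using cball_fin
    by (intro integrable_mult_right integrable_real_indicator) auto
  have g2i: "integrable M g2"
  proof (rule int_supp_L2[OF f, where c=1 and a=x and r="s1+s2"])
    show "g2 \<in> borel_measurable M" unfolding g2_def
      by (rule borel_measurable_times[OF borel_measurable_indicator[OF cball_sets] fm])
  qed (auto simp: g2_def)
  have g1p: "g1 z \<ge> 0" for z using B1 B2 by (simp add: g1_def)
  have g2p: "g2 y \<ge> 0" for y by (simp add: g2_def)
  have Di: "integrable (M \<Otimes>\<^sub>M M) (\<lambda>p. g1 (fst p) * g2 (snd p))"
    by (rule integrable_prod[OF g1i g2i g1p g2p])
  have Gm: "(\<lambda>p. G (fst p) (snd p)) \<in> borel_measurable (M \<Otimes>\<^sub>M M)"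
  proof -
    have a: "(\<lambda>p. k1 (x, fst p)) \<in> borel_measurable (M \<Otimes>\<^sub>M M)"
      by (rule measurable_compose[OF measurable_fst cont_meas_y[OF kbD(1)[OF k1]]])
    have b: "(\<lambda>p. k2 (fst p, snd p)) \<in> borel_measurable (M \<Otimes>\<^sub>M M)"
      using cont_meas2[OF kbD(1)[OF k2]] by simp
    have c: "(\<lambda>p. f (snd p)) \<in> borel_measurable (M \<Otimes>\<^sub>M M)"
      by (rule measurable_compose[OF measurable_snd L2_meas[OF f]])
    show ?thesis unfolding G_def by (intro borel_measurable_times a b c)
  qed
  have Gb: "norm (G z y) \<le> norm (g1 z * g2 y)" for z y
  proof (cases "z \<in> cball x s1")
    case False
    then show ?thesis using kbD(5)[OF k1, of x z] by (simp add: G_def)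
  next
    case zin: True
    show ?thesis
    proof (cases "y \<in> cball x (s1 + s2)")
      case True
      have "norm (G z y) = cmod (k1 (x, z)) * cmod (k2 (z, y)) * cmod (f y)"
        by (simp add: G_def norm_mult)
      also have "\<dots> \<le> B1 * B2 * cmod (f y)"
        using kbD(4)[OF k1, of "(x, z)"] kbD(4)[OF k2, of "(z, y)"] B1
        by (intro mult_right_mono mult_mono) auto
      also have "\<dots> = g1 z * g2 y" using zin True by (simp add: g1_def g2_def)
      also have "\<dots> \<le> norm (g1 z * g2 y)" by simp
      finally show ?thesis .
    next
      case False
      then have "s2 < dist z y" using zin dist_triangle[of x y z] by simp
      then show ?thesis using kbD(5)[OF k2, of z y] by (simp add: G_def)
    qed
  qed
  have Gi: "integrable (M \<Otimes>\<^sub>M M) (case_prod G)"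
  proof -
    have "integrable (M \<Otimes>\<^sub>M M) (\<lambda>p. G (fst p) (snd p))"
      by (rule Bochner_Integration.integrable_bound[OF Di Gm]) (use Gb in \<open>auto intro: AE_I2\<close>)
    then show ?thesis by (simp add: split_beta')
  qed
  have F: "(\<integral>y. (\<integral>z. G z y \<partial>M) \<partial>M) = (\<integral>z. (\<integral>y. G z y \<partial>M) \<partial>M)"
    by (rule pair_sigma_finite.Fubini_integral[OF pair_sf Gi])
  have L: "op_kernel M k1 (op_kernel M k2 f) x = (\<integral>z. (\<integral>y. G z y \<partial>M) \<partial>M)"
    unfolding op_kernel_def G_def by (simp add: mult.assoc)
  have R: "op_kernel M (kcomp M k1 k2) f x = (\<integral>y. (\<integral>z. G z y \<partial>M) \<partial>M)"
    unfolding op_kernel_def G_def kcomp_def by simp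
  show ?thesis using L R F by simp
qed

lemma ksum_good:
  assumes "good_kernel k1" "good_kernel k2"
  shows "good_kernel (\<lambda>p. k1 p + k2 p)"
  unfolding good_kernel_def
proof (intro conjI)
  obtain a1 where a1: "\<And>p. cmod (k1 p) \<le> a1" using assms(1) by (auto simp: good_kernel_def bounded_iff)
  obtain a2 where a2: "\<And>p. cmod (k2 p) \<le> a2" using assms(2) by (auto simp: good_kernel_def bounded_iff)
  show "bounded (range (\<lambda>p. k1 p + k2 p))"
  proof -
    have "\<And>p. cmod (k1 p + k2 p) \<le> a1 + a2"
      using a1 a2 by (metis add_mono norm_triangle_ineq order_trans)
    then show ?thesis unfolding bounded_iff by auto
  qed
  show "uniformly_continuous_on UNIV (\<lambda>p. k1 p + k2 p)"
    using assms by (intro uniformly_continuous_on_add) (auto simp: good_kernel_def)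
  obtain r1 where r1: "\<And>x y. r1 < dist x y \<Longrightarrow> k1 (x, y) = 0" using assms(1) by (auto simp: good_kernel_def controlled_def)
  obtain r2 where r2: "\<And>x y. r2 < dist x y \<Longrightarrow> k2 (x, y) = 0" using assms(2) by (auto simp: good_kernel_def controlled_def)
  show "controlled (\<lambda>p. k1 p + k2 p)"
    unfolding controlled_def using r1 r2 by (intro exI[of _ "max r1 r2"]) auto
qed

lemma kscale_good:
  assumes "good_kernel k"
  shows "good_kernel (\<lambda>p. c * k p)"
  unfolding good_kernel_def
proof (intro conjI)
  obtain a where a: "\<And>p. cmod (k p) \<le> a" using assms by (auto simp: good_kernel_def bounded_iff)
  show "bounded (range (\<lambda>p. c * k p))"
    unfolding bounded_iff using a by (auto intro!: exI[of _ "cmod c * a"] simp: norm_mult mult_left_mono)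
  show "uniformly_continuous_on UNIV (\<lambda>p. c * k p)"
    using assms by (intro bounded_linear.uniformly_continuous_on[OF bounded_linear_mult_right]) (auto simp: good_kernel_def)
  obtain r where r: "\<And>x y. r < dist x y \<Longrightarrow> k (x, y) = 0" using assms by (auto simp: good_kernel_def controlled_def)
  show "controlled (\<lambda>p. c * k p)"
    unfolding controlled_def using r by (intro exI[of _ r]) auto
qed

lemma ksum_op:
  assumes k1: "kb k1 B1 s1" and k2: "kb k2 B2 s2" and f: "f \<in> L2 M"
  shows "op_kernel M (\<lambda>p. k1 p + k2 p) f x = op_kernel M k1 f x + op_kernel M k2 f x"
  unfolding op_kernel_def distrib_right
  by (rule Bochner_Integration.integral_add[OF kernel_int[OF k1 f] kernel_int[OF k2 f]])

lemma kscale_op: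
  "op_kernel M (\<lambda>p. c * k p) f x = c * op_kernel M k f x"
  unfolding op_kernel_def by (simp add: mult.assoc)

end

lemma opnorm_cong:
  assumes "\<And>f. f \<in> L2 M \<Longrightarrow> D f = D' f"
  shows "opnorm M D = opnorm M D'"
proof -
  have "{l2norm M (D f) |f. f \<in> L2 M \<and> l2norm M f \<le> 1} = {l2norm M (D' f) |f. f \<in> L2 M \<and> l2norm M f \<le> 1}"
    using assms by metis
  then show ?thesis unfolding opnorm_def by simp
qed

lemma roe_bounded: "T \<in> roe M \<Longrightarrow> bounded_op M T"
  by (simp add: roe_def)

lemma roe_approx: "T \<in> roe M \<Longrightarrow> \<epsilon> > 0 \<Longrightarrow> \<exists>k. good_kernel k \<and> opnorm M (op_diff T (op_kernel M k)) < \<epsilon>"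
  by (simp add: roe_def)

lemma opnorm_zero_le: "opnorm M (\<lambda>f x. 0) \<le> 0"
  by (rule opnorm_le) (auto simp: l2norm_zero)

lemma good_kernel_zero: "good_kernel (\<lambda>p. 0)"
  unfolding good_kernel_def controlled_def by (simp add: uniformly_continuous_on_const)

context ctx
begin

lemma kernel_bounded_good: "good_kernel k \<Longrightarrow> bounded_op M (op_kernel M k)"
  by (metis good_kernel_kb kernel_bounded_op)

lemma roe_zero: "op_zero \<in> roe M"
  unfolding roe_def
proof (intro CollectI conjI allI impI exI[of _ "\<lambda>p. 0"])
  show "bounded_op M op_zero" by (rule bounded_op_zero)
  fix e :: real assume e: "e > 0"
  show "good_kernel (\<lambda>p. 0)" by (rule good_kernel_zero)
  have "op_diff op_zero (op_kernel M (\<lambda>p. 0)) = (\<lambda>f x. 0)"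
    by (simp add: op_diff_def op_zero_def op_kernel_def fun_eq_iff)
  then show "opnorm M (op_diff op_zero (op_kernel M (\<lambda>p. 0))) < e"
    using opnorm_zero_le[of M] e by simp
qed

lemma roe_add:
  assumes S: "S \<in> roe M" and T: "T \<in> roe M"
  shows "op_add S T \<in> roe M"
  unfolding roe_def
proof (intro CollectI conjI allI impI)
  show "bounded_op M (op_add S T)" by (intro bounded_op_add roe_bounded S T)
  fix e :: real assume e: "e > 0"
  obtain k1 where k1: "good_kernel k1" "opnorm M (op_diff S (op_kernel M k1)) < e / 2"
    using roe_approx[OF S, of "e/2"] e by auto
  obtain k2 where k2: "good_kernel k2" "opnorm M (op_diff T (op_kernel M k2)) < e / 2"
    using roe_approx[OF T, of "e/2"] e by auto
  obtain B1 s1 where b1: "kb k1 B1 s1" using good_kernel_kb[OF k1(1)] by blast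
  obtain B2 s2 where b2: "kb k2 B2 s2" using good_kernel_kb[OF k2(1)] by blast
  show "\<exists>k. good_kernel k \<and> opnorm M (op_diff (op_add S T) (op_kernel M k)) < e"
  proof (intro exI[of _ "\<lambda>p. k1 p + k2 p"] conjI)
    show "good_kernel (\<lambda>p. k1 p + k2 p)" by (rule ksum_good[OF k1(1) k2(1)])
    have "opnorm M (op_diff (op_add S T) (op_kernel M (\<lambda>p. k1 p + k2 p)))
       = opnorm M (op_add (op_diff S (op_kernel M k1)) (op_diff T (op_kernel M k2)))"
      by (rule opnorm_cong) (auto simp: op_diff_def op_add_def fun_eq_iff ksum_op[OF b1 b2])
    also have "\<dots> \<le> opnorm M (op_diff S (op_kernel M k1)) + opnorm M (op_diff T (op_kernel M k2))"
      by (intro opnorm_add_le bounded_op_diff roe_bounded S T kernel_bounded_good k1(1) k2(1))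
    also have "\<dots> < e" using k1(2) k2(2) by simp
    finally show "opnorm M (op_diff (op_add S T) (op_kernel M (\<lambda>p. k1 p + k2 p))) < e" .
  qed
qed

lemma roe_scale:
  assumes T: "T \<in> roe M"
  shows "op_scale c T \<in> roe M"
  unfolding roe_def
proof (intro CollectI conjI allI impI)
  show "bounded_op M (op_scale c T)" by (intro bounded_op_scale roe_bounded T)
  fix e :: real assume e: "e > 0"
  have e': "e / (cmod c + 1) > 0" using e by (simp add: add_nonneg_pos)
  obtain k where k: "good_kernel k" "opnorm M (op_diff T (op_kernel M k)) < e / (cmod c + 1)"
    using roe_approx[OF T e'] by auto
  show "\<exists>k. good_kernel k \<and> opnorm M (op_diff (op_scale c T) (op_kernel M k)) < e"
  proof (intro exI[of _ "\<lambda>p. c * k p"] conjI)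
    show "good_kernel (\<lambda>p. c * k p)" by (rule kscale_good[OF k(1)])
    have "opnorm M (op_diff (op_scale c T) (op_kernel M (\<lambda>p. c * k p)))
       = opnorm M (op_scale c (op_diff T (op_kernel M k)))"
      by (rule opnorm_cong) (auto simp: op_diff_def op_scale_def fun_eq_iff kscale_op algebra_simps)
    also have "\<dots> \<le> cmod c * opnorm M (op_diff T (op_kernel M k))"
      by (intro opnorm_scale_le bounded_op_diff roe_bounded T kernel_bounded_good k(1))
    also have "\<dots> \<le> cmod c * (e / (cmod c + 1))"
      using k(2) by (intro mult_left_mono) auto
    also have "\<dots> < e"
    proof -
      have "cmod c * (e / (cmod c + 1)) = e * (cmod c / (cmod c + 1))" by simp
      also have "\<dots> < e * 1"
      proof (rule mult_strict_left_mono[OF _ e])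
        show "cmod c / (cmod c + 1) < 1" using norm_ge_zero[of c] unfolding divide_less_eq_1 by linarith
      qed
      finally show ?thesis by simp
    qed
    finally show "opnorm M (op_diff (op_scale c T) (op_kernel M (\<lambda>p. c * k p))) < e" .
  qed
qed

lemma opnorm_kernel_le:
  assumes A: "bounded_op M A" and k: "good_kernel k"
  shows "opnorm M (op_kernel M k) \<le> opnorm M A + opnorm M (op_diff A (op_kernel M k))"
proof -
  have "opnorm M (op_kernel M k) = opnorm M (op_diff A (op_diff A (op_kernel M k)))"
    by (rule opnorm_cong) (simp add: op_diff_def fun_eq_iff)
  also have "\<dots> \<le> opnorm M A + opnorm M (op_diff A (op_kernel M k))"
    by (intro opnorm_diff_le A bounded_op_diff kernel_bounded_good k)
  finally show ?thesis .
qed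

lemma roe_comp:
  assumes A: "A \<in> roe M" and T: "T \<in> roe M"
  shows "A \<circ> T \<in> roe M"
  unfolding roe_def
proof (intro CollectI conjI allI impI)
  have Ab: "bounded_op M A" and Tb: "bounded_op M T" using roe_bounded A T by auto
  show "bounded_op M (A \<circ> T)" by (intro bounded_op_comp Ab Tb)
  fix e :: real assume e: "e > 0"
  define a where "a = opnorm M A"
  define t where "t = opnorm M T"
  have a0: "a \<ge> 0" and t0: "t \<ge> 0" using opnorm_nonneg Ab Tb by (auto simp: a_def t_def)
  define \<delta> where "\<delta> = min 1 (e / (t + a + 2))"
  have \<delta>: "\<delta> > 0" "\<delta> \<le> 1" "\<delta> \<le> e / (t + a + 2)" using e a0 t0 by (auto simp: \<delta>_def)
  obtain k1 where k1: "good_kernel k1" "opnorm M (op_diff A (op_kernel M k1)) < \<delta>"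
    using roe_approx[OF A \<delta>(1)] by auto
  obtain k2 where k2: "good_kernel k2" "opnorm M (op_diff T (op_kernel M k2)) < \<delta>"
    using roe_approx[OF T \<delta>(1)] by auto
  obtain B1 s1 where b1: "kb k1 B1 s1" using good_kernel_kb[OF k1(1)] by blast
  obtain B2 s2 where b2: "kb k2 B2 s2" using good_kernel_kb[OF k2(1)] by blast
  have K1b: "bounded_op M (op_kernel M k1)" by (rule kernel_bounded_good[OF k1(1)])
  have K2b: "bounded_op M (op_kernel M k2)" by (rule kernel_bounded_good[OF k2(1)])
  show "\<exists>k. good_kernel k \<and> opnorm M (op_diff (A \<circ> T) (op_kernel M k)) < e"
  proof (intro exI[of _ "kcomp M k1 k2"] conjI)
    show "good_kernel (kcomp M k1 k2)" by (rule kcomp_good[OF k1(1) k2(1) b1 b2])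
    have "opnorm M (op_diff (A \<circ> T) (op_kernel M (kcomp M k1 k2)))
      = opnorm M (op_add (op_diff A (op_kernel M k1) \<circ> T) (op_kernel M k1 \<circ> op_diff T (op_kernel M k2)))"
    proof (rule opnorm_cong)
      fix f assume f: "f \<in> L2 M"
      have Tf: "T f \<in> L2 M" by (rule bounded_opD(1)[OF Tb f])
      have K2f: "op_kernel M k2 f \<in> L2 M" by (rule bounded_opD(1)[OF K2b f])
      show "op_diff (A \<circ> T) (op_kernel M (kcomp M k1 k2)) f
          = op_add (op_diff A (op_kernel M k1) \<circ> T) (op_kernel M k1 \<circ> op_diff T (op_kernel M k2)) f"
        unfolding op_diff_def op_add_def
        by (simp add: fun_eq_iff kcomp_op[OF b1 b2 f, symmetric] kernel_diff[OF b1 Tf K2f])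
    qed
    also have "\<dots> \<le> opnorm M (op_diff A (op_kernel M k1) \<circ> T) + opnorm M (op_kernel M k1 \<circ> op_diff T (op_kernel M k2))"
      by (intro opnorm_add_le bounded_op_comp bounded_op_diff Ab Tb K1b K2b)
    also have "\<dots> \<le> opnorm M (op_diff A (op_kernel M k1)) * t + opnorm M (op_kernel M k1) * opnorm M (op_diff T (op_kernel M k2))"
      unfolding t_def by (intro add_mono opnorm_comp_le bounded_op_diff Ab Tb K1b K2b)
    also have "\<dots> \<le> \<delta> * t + (a + \<delta>) * \<delta>"
    proof (intro add_mono mult_right_mono mult_mono)
      show "opnorm M (op_diff A (op_kernel M k1)) \<le> \<delta>" using k1(2) by simp
      show "opnorm M (op_kernel M k1) \<le> a + \<delta>"
        using opnorm_kernel_le[OF Ab k1(1)] k1(2) by (simp add: a_def)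
      show "opnorm M (op_diff T (op_kernel M k2)) \<le> \<delta>" using k2(2) by simp
      show "0 \<le> t" by (rule t0)
      show "0 \<le> a + \<delta>" using a0 \<delta> by simp
      show "0 \<le> opnorm M (op_diff T (op_kernel M k2))" by (intro opnorm_nonneg bounded_op_diff Tb K2b)
    qed
    also have "\<dots> \<le> \<delta> * (t + a + 1)"
      using \<delta> by (simp add: algebra_simps mult_left_le)
    also have "\<dots> \<le> e / (t + a + 2) * (t + a + 1)"
      using \<delta>(3) a0 t0 by (intro mult_right_mono) auto
    also have "\<dots> < e"
    proof -
      have "e / (t + a + 2) * (t + a + 1) = e * ((t + a + 1) / (t + a + 2))" by simp
      also have "\<dots> < e * 1" using e a0 t0 by (intro mult_strict_left_mono) auto
      finally show ?thesis by simp
    qed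
    finally show "opnorm M (op_diff (A \<circ> T) (op_kernel M (kcomp M k1 k2))) < e" .
  qed
qed

lemma kernel_local:
  assumes k: "kb k B s" and loc: "\<And>x y. x \<in> A1 \<Longrightarrow> dist x y \<le> s \<Longrightarrow> y \<in> A2"
  shows "mult_ind A1 (op_kernel M k g) = mult_ind A1 (op_kernel M k (mult_ind A2 g))"
proof (rule ext)
  fix x
  show "mult_ind A1 (op_kernel M k g) x = mult_ind A1 (op_kernel M k (mult_ind A2 g)) x"
  proof (cases "x \<in> A1")
    case True
    have "(\<lambda>y. k (x, y) * g y) = (\<lambda>y. k (x, y) * mult_ind A2 g y)"
    proof (rule ext)
      fix y show "k (x, y) * g y = k (x, y) * mult_ind A2 g y"
      proof (cases "dist x y \<le> s")
        case True
        then show ?thesis using loc[OF \<open>x \<in> A1\<close>] by (simp add: mult_ind_def)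
      next
        case False
        then show ?thesis using kbD(5)[OF k, of x y] by simp
      qed
    qed
    then show ?thesis by (simp add: mult_ind_def op_kernel_def)
  next
    case False
    then show ?thesis by (simp add: mult_ind_def)
  qed
qed

lemma left_mult_bound:
  assumes A: "bounded_op M A" and T: "bounded_op M T" and k: "good_kernel k" and kb: "kb k B s"
    and d: "opnorm M (op_diff A (op_kernel M k)) \<le> \<delta>"
    and A1: "A1 \<in> sets M" and A2: "A2 \<in> sets M"
    and loc: "\<And>x y. x \<in> A1 \<Longrightarrow> dist x y \<le> s \<Longrightarrow> y \<in> A2"
  shows "opnorm M (mult_ind A1 \<circ> (A \<circ> T)) \<le> \<delta> * opnorm M T + (opnorm M A + \<delta>) * opnorm M (mult_ind A2 \<circ> T)"
proof (rule opnorm_le)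
  have Kb: "bounded_op M (op_kernel M k)" by (rule kernel_bounded_good[OF k])
  have Db: "bounded_op M (op_diff A (op_kernel M k))" by (intro bounded_op_diff A Kb)
  have A2T: "bounded_op M (mult_ind A2 \<circ> T)" by (intro bounded_op_comp bounded_op_ind A2 T)
  have d0: "\<delta> \<ge> 0" using d opnorm_nonneg[OF Db] by simp
  have Kn: "opnorm M (op_kernel M k) \<le> opnorm M A + \<delta>"
    using opnorm_kernel_le[OF A k] d by simp
  show "0 \<le> \<delta> * opnorm M T + (opnorm M A + \<delta>) * opnorm M (mult_ind A2 \<circ> T)"
    using d0 opnorm_nonneg[OF T] opnorm_nonneg[OF A] opnorm_nonneg[OF A2T] by simp
  fix f assume f: "f \<in> L2 M"
  define h where "h = T f"
  have h: "h \<in> L2 M" unfolding h_def by (rule bounded_opD(1)[OF T f])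
  have h2: "mult_ind A2 h \<in> L2 M" by (rule L2_ind[OF A2 h])
  have eq: "(mult_ind A1 \<circ> (A \<circ> T)) f
      = (\<lambda>x. mult_ind A1 (op_diff A (op_kernel M k) h) x + mult_ind A1 (op_kernel M k (mult_ind A2 h)) x)"
  proof -
    have "mult_ind A1 (op_kernel M k h) = mult_ind A1 (op_kernel M k (mult_ind A2 h))"
      by (rule kernel_local[OF kb loc])
    then have "\<And>x. mult_ind A1 (op_kernel M k h) x = mult_ind A1 (op_kernel M k (mult_ind A2 h)) x" by simp
    then show ?thesis unfolding h_def
      by (auto simp: fun_eq_iff mult_ind_def op_diff_def algebra_simps)
  qed
  have L1: "mult_ind A1 (op_diff A (op_kernel M k) h) \<in> L2 M"
    by (rule L2_ind[OF A1 bounded_opD(1)[OF Db h]])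
  have L2': "mult_ind A1 (op_kernel M k (mult_ind A2 h)) \<in> L2 M"
    by (rule L2_ind[OF A1 bounded_opD(1)[OF Kb h2]])
  have "l2norm M ((mult_ind A1 \<circ> (A \<circ> T)) f)
      \<le> l2norm M (mult_ind A1 (op_diff A (op_kernel M k) h)) + l2norm M (mult_ind A1 (op_kernel M k (mult_ind A2 h)))"
    unfolding eq by (rule minkowski[OF L1 L2'])
  also have "\<dots> \<le> l2norm M (op_diff A (op_kernel M k) h) + l2norm M (op_kernel M k (mult_ind A2 h))"
    by (intro add_mono l2norm_le_pointwise bounded_opD(1)[OF Db h] bounded_opD(1)[OF Kb h2])
       (auto simp: mult_ind_def indicator_def)
  also have "\<dots> \<le> \<delta> * (opnorm M T * l2norm M f) + (opnorm M A + \<delta>) * (opnorm M (mult_ind A2 \<circ> T) * l2norm M f)"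
  proof (rule add_mono)
    have "l2norm M (op_diff A (op_kernel M k) h) \<le> opnorm M (op_diff A (op_kernel M k)) * l2norm M h"
      by (rule opnorm_bound[OF Db h])
    also have "\<dots> \<le> \<delta> * (opnorm M T * l2norm M f)"
      using d l2norm_nonneg[of M h] opnorm_bound[OF T f] d0
      by (intro mult_mono) (auto simp: h_def)
    finally show "l2norm M (op_diff A (op_kernel M k) h) \<le> \<delta> * (opnorm M T * l2norm M f)" .
    have "l2norm M (op_kernel M k (mult_ind A2 h)) \<le> opnorm M (op_kernel M k) * l2norm M (mult_ind A2 h)"
      by (rule opnorm_bound[OF Kb h2])
    also have "\<dots> \<le> (opnorm M A + \<delta>) * (opnorm M (mult_ind A2 \<circ> T) * l2norm M f)"
      using Kn opnorm_bound[OF A2T f] l2norm_nonneg[of M "mult_ind A2 h"] d0 opnorm_nonneg[OF A]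
      by (intro mult_mono) (auto simp: h_def)
    finally show "l2norm M (op_kernel M k (mult_ind A2 h)) \<le> (opnorm M A + \<delta>) * (opnorm M (mult_ind A2 \<circ> T) * l2norm M f)" .
  qed
  also have "\<dots> = (\<delta> * opnorm M T + (opnorm M A + \<delta>) * opnorm M (mult_ind A2 \<circ> T)) * l2norm M f"
    by (simp add: algebra_simps)
  finally show "l2norm M ((mult_ind A1 \<circ> (A \<circ> T)) f)
      \<le> (\<delta> * opnorm M T + (opnorm M A + \<delta>) * opnorm M (mult_ind A2 \<circ> T)) * l2norm M f" .
qed

end

lemma tendsto_nonneg_iff:
  fixes g :: "'b \<Rightarrow> real"
  assumes "\<And>x. 0 \<le> g x"
  shows "(g \<longlongrightarrow> 0) F \<longleftrightarrow> (\<forall>e>0. eventually (\<lambda>x. g x < e) F)"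
  unfolding tendsto_iff dist_real_def using assms by simp

lemma rint_sub: "x \<in> rint F r \<Longrightarrow> dist x y \<le> r \<Longrightarrow> y \<in> F"
  unfolding rint_def by force

lemma rint_cball: "x \<in> rint F r \<Longrightarrow> cball x r \<subseteq> F"
  using rint_sub by auto

lemma rint_open: "open (rint F r)"
  unfolding open_dist
proof (intro ballI)
  fix x assume "x \<in> rint F r"
  then obtain \<delta> where \<delta>: "\<delta> > r" "\<And>y. y \<notin> F \<Longrightarrow> \<delta> \<le> dist x y" by (auto simp: rint_def)
  show "\<exists>e>0. \<forall>y. dist y x < e \<longrightarrow> y \<in> rint F r"
  proof (intro exI[of _ "(\<delta> - r) / 2"] conjI allI impI)
    show "(\<delta> - r) / 2 > 0" using \<delta>(1) by simp
    fix y assume y: "dist y x < (\<delta> - r) / 2"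
    show "y \<in> rint F r"
      unfolding rint_def
    proof (intro CollectI exI[of _ "\<delta> - (\<delta> - r) / 2"] conjI allI impI)
      show "\<delta> - (\<delta> - r) / 2 > r" using \<delta>(1) by (simp add: field_simps)
      fix z assume "z \<notin> F"
      then have "\<delta> \<le> dist x z" by (rule \<delta>(2))
      also have "\<dots> \<le> dist x y + dist y z" by (rule dist_triangle)
      finally show "\<delta> - (\<delta> - r) / 2 \<le> dist y z" using y by (simp add: dist_commute field_simps)
    qed
  qed
qed

lemma arith_scale: "(a::real) \<ge> 0 \<Longrightarrow> v \<ge> 0 \<Longrightarrow> v < e / (a + 1) \<Longrightarrow> a * v < e"
proof -
  assume a: "a \<ge> 0" and v: "v \<ge> 0" and ve: "v < e / (a + 1)"
  have "(a + 1) * v < e" using ve a by (simp add: pos_less_divide_eq mult.commute)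
  moreover have "a * v \<le> (a + 1) * v" using v by (simp add: mult_right_mono)
  ultimately show ?thesis by linarith
qed

lemma arith_left:
  fixes t a e w \<delta> :: real
  assumes t: "0 \<le> t" and a: "0 \<le> a" and e: "0 < e" and d: "\<delta> = min 1 (e / (2 * (t + 1)))"
    and w: "0 \<le> w" "w < e / (2 * (a + 2))"
  shows "\<delta> * t + (a + \<delta>) * w < e"
proof -
  have d1: "\<delta> \<le> 1" and d2: "\<delta> \<le> e / (2 * (t + 1))" and d0: "\<delta> \<ge> 0" using d e t by auto
  have "\<delta> * t \<le> e / (2 * (t + 1)) * t" using d2 t by (rule mult_right_mono)
  also have "\<dots> \<le> e / 2"
  proof -
    have "e / (2 * (t + 1)) * t = (e / 2) * (t / (t + 1))" by simp
    also have "\<dots> \<le> (e / 2) * 1" using e t by (intro mult_left_mono) auto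
    finally show ?thesis by simp
  qed
  finally have p1: "\<delta> * t \<le> e / 2" .
  have "(a + \<delta>) * w \<le> (a + 2) * w" using d1 w(1) by (intro mult_right_mono) auto
  also have "\<dots> < e / 2" using w(2) a by (simp add: pos_less_divide_eq algebra_simps)
  finally have p2: "(a + \<delta>) * w < e / 2" .
  show ?thesis using p1 p2 by linarith
qed

context ctx
begin

lemma rint_sets: "rint F r \<in> sets M"
  by (rule open_sets[OF rint_open])

lemma bop_ind_comp: "A \<in> sets M \<Longrightarrow> bounded_op M T \<Longrightarrow> bounded_op M (mult_ind A \<circ> T)"
  by (intro bounded_op_comp bounded_op_ind)

lemma J_char:
  assumes T: "bounded_op M T"
  shows "(INF F \<in> {F. F \<in> sets M \<and> eventually (\<lambda>x. x \<in> F) \<eta>}. opnorm M (mult_ind F \<circ> T)) = 0 \<longleftrightarrow>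
    (\<forall>e>0. \<exists>F. F \<in> sets M \<and> eventually (\<lambda>x. x \<in> F) \<eta> \<and> opnorm M (mult_ind F \<circ> T) < e)"
proof -
  let ?X = "{F. F \<in> sets M \<and> eventually (\<lambda>x. x \<in> F) \<eta>}"
  let ?f = "\<lambda>F. opnorm M (mult_ind F \<circ> T)"
  have ne: "?X \<noteq> {}" using sets.top[of M] by (auto intro!: exI[of _ UNIV])
  have nn: "\<And>F. F \<in> ?X \<Longrightarrow> 0 \<le> ?f F" by (auto intro!: opnorm_nonneg bop_ind_comp T)
  have bdd: "bdd_below (?f ` ?X)" by (rule bdd_belowI2[of _ 0]) (use nn in auto)
  show ?thesis
  proof
    assume h: "(INF F\<in>?X. ?f F) = 0"
    show "\<forall>e>0. \<exists>F. F \<in> sets M \<and> eventually (\<lambda>x. x \<in> F) \<eta> \<and> ?f F < e"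
    proof (intro allI impI)
      fix e :: real assume e: "e > 0"
      then have "(INF F\<in>?X. ?f F) < e" using h by simp
      then obtain F where "F \<in> ?X" "?f F < e" using cINF_less_iff[OF ne bdd] by blast
      then show "\<exists>F. F \<in> sets M \<and> eventually (\<lambda>x. x \<in> F) \<eta> \<and> ?f F < e" by auto
    qed
  next
    assume h: "\<forall>e>0. \<exists>F. F \<in> sets M \<and> eventually (\<lambda>x. x \<in> F) \<eta> \<and> ?f F < e"
    have ge: "0 \<le> (INF F\<in>?X. ?f F)" by (rule cINF_greatest[OF ne nn])
    have le: "(INF F\<in>?X. ?f F) \<le> 0"
    proof (rule ccontr)
      assume "\<not> (INF F\<in>?X. ?f F) \<le> 0"
      then have p: "(INF F\<in>?X. ?f F) > 0" by simp
      obtain F where F: "F \<in> sets M" "eventually (\<lambda>x. x \<in> F) \<eta>" "?f F < (INF F\<in>?X. ?f F)"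
        using h p by blast
      have "(INF F\<in>?X. ?f F) \<le> ?f F" by (rule cINF_lower[OF bdd]) (use F in auto)
      with F(3) show False by simp
    qed
    show "(INF F\<in>?X. ?f F) = 0" using ge le by simp
  qed
qed

lemma J_iff: "T \<in> J_ideal M \<eta> \<longleftrightarrow> T \<in> roe M \<and>
    (\<forall>e>0. \<exists>F. F \<in> sets M \<and> eventually (\<lambda>x. x \<in> F) \<eta> \<and> opnorm M (mult_ind F \<circ> T) < e)"
  unfolding J_ideal_def using J_char roe_bounded by blast

lemma G_iff: "T \<in> G_ideal M \<xi> \<longleftrightarrow> T \<in> roe M \<and>
    (\<forall>r>0. \<forall>e>0. eventually (\<lambda>x. opnorm M (mult_ind (cball x r) \<circ> T) < e) \<xi>)"
proof -
  have "((\<lambda>x. opnorm M (mult_ind (cball x r) \<circ> T)) \<longlongrightarrow> 0) \<xi> \<longleftrightarrow>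
      (\<forall>e>0. eventually (\<lambda>x. opnorm M (mult_ind (cball x r) \<circ> T) < e) \<xi>)" if "T \<in> roe M" for r
    by (rule tendsto_nonneg_iff) (intro opnorm_nonneg bop_ind_comp cball_sets roe_bounded that)
  then show ?thesis unfolding G_ideal_def by auto
qed

lemma ind_add:
  assumes "B \<in> sets M" "bounded_op M S" "bounded_op M T"
  shows "opnorm M (mult_ind B \<circ> op_add S T) \<le> opnorm M (mult_ind B \<circ> S) + opnorm M (mult_ind B \<circ> T)"
proof -
  have "mult_ind B \<circ> op_add S T = op_add (mult_ind B \<circ> S) (mult_ind B \<circ> T)"
    by (simp add: fun_eq_iff mult_ind_def op_add_def algebra_simps)
  then show ?thesis using assms by (simp add: opnorm_add_le bop_ind_comp)
qed

lemma ind_scale: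
  assumes "B \<in> sets M" "bounded_op M T"
  shows "opnorm M (mult_ind B \<circ> op_scale c T) \<le> cmod c * opnorm M (mult_ind B \<circ> T)"
proof -
  have "mult_ind B \<circ> op_scale c T = op_scale c (mult_ind B \<circ> T)"
    by (simp add: fun_eq_iff mult_ind_def op_scale_def algebra_simps)
  then show ?thesis using assms by (simp add: opnorm_scale_le bop_ind_comp)
qed

lemma ind_right:
  assumes "B \<in> sets M" "bounded_op M T" "bounded_op M A"
  shows "opnorm M (mult_ind B \<circ> (T \<circ> A)) \<le> opnorm M (mult_ind B \<circ> T) * opnorm M A"
proof -
  have "mult_ind B \<circ> (T \<circ> A) = (mult_ind B \<circ> T) \<circ> A" by (simp add: o_assoc)
  then show ?thesis using assms by (simp add: opnorm_comp_le bop_ind_comp)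
qed

lemma ind_zero: "opnorm M (mult_ind B \<circ> op_zero) \<le> 0"
proof -
  have "mult_ind B \<circ> op_zero = (\<lambda>f x. 0)" by (simp add: fun_eq_iff mult_ind_def op_zero_def)
  then show ?thesis using opnorm_zero_le[of M] by simp
qed

lemma ind_closure:
  assumes B: "B \<in> sets M" and T: "bounded_op M T" and S: "bounded_op M S"
  shows "opnorm M (mult_ind B \<circ> T) \<le> opnorm M (mult_ind B \<circ> S) + opnorm M (op_diff T S)"
proof -
  have "mult_ind B \<circ> T = op_add (mult_ind B \<circ> S) (mult_ind B \<circ> op_diff T S)"
    by (simp add: fun_eq_iff mult_ind_def op_add_def op_diff_def algebra_simps)
  then have "opnorm M (mult_ind B \<circ> T) \<le> opnorm M (mult_ind B \<circ> S) + opnorm M (mult_ind B \<circ> op_diff T S)"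
    using B T S by (simp add: opnorm_add_le bop_ind_comp bounded_op_diff)
  also have "opnorm M (mult_ind B \<circ> op_diff T S) \<le> opnorm M (op_diff T S)"
    using T S by (intro opnorm_ind_le bounded_op_diff)
  finally show ?thesis by (simp add: comp_def)
qed

end

context ctx
begin

lemma G_ev:
  assumes "T \<in> G_ideal M \<xi>" "r > 0" "e > 0"
  shows "eventually (\<lambda>x. opnorm M (mult_ind (cball x r) \<circ> T) < e) \<xi>"
  using assms by (simp add: G_iff)

lemma J_ex:
  assumes "T \<in> J_ideal M \<eta>" "e > 0"
  shows "\<exists>F. F \<in> sets M \<and> eventually (\<lambda>x. x \<in> F) \<eta> \<and> opnorm M (mult_ind F \<circ> T) < e"
  using assms by (simp add: J_iff)

lemma G_closed: "closed_ideal M (G_ideal M \<xi>)"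
  unfolding closed_ideal_def
proof (intro conjI ballI allI impI)
  show "G_ideal M \<xi> \<subseteq> roe M" by (auto simp: G_iff)
  show "op_zero \<in> G_ideal M \<xi>"
    unfolding G_iff
  proof (intro conjI allI impI roe_zero)
    fix r e :: real assume e: "e > 0"
    have "\<forall>x. opnorm M (mult_ind (cball x r) \<circ> op_zero) < e"
      using ind_zero e by (metis le_less_trans)
    then show "eventually (\<lambda>x. opnorm M (mult_ind (cball x r) \<circ> op_zero) < e) \<xi>"
      by (rule always_eventually)
  qed
next
  fix S T assume S: "S \<in> G_ideal M \<xi>" and T: "T \<in> G_ideal M \<xi>"
  have Sr: "S \<in> roe M" and Tr: "T \<in> roe M" using S T by (auto simp: G_iff)
  show "op_add S T \<in> G_ideal M \<xi>"
    unfolding G_iff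
  proof (intro conjI allI impI roe_add Sr Tr)
    fix r e :: real assume r: "r > 0" and e: "e > 0"
    have "eventually (\<lambda>x. opnorm M (mult_ind (cball x r) \<circ> S) < e / 2) \<xi>"
      by (rule G_ev[OF S(1) r half_gt_zero[OF e]])
    moreover have "eventually (\<lambda>x. opnorm M (mult_ind (cball x r) \<circ> T) < e / 2) \<xi>"
      by (rule G_ev[OF T r half_gt_zero[OF e]])
    ultimately show "eventually (\<lambda>x. opnorm M (mult_ind (cball x r) \<circ> op_add S T) < e) \<xi>"
    proof eventually_elim
      case (elim x)
      have "opnorm M (mult_ind (cball x r) \<circ> op_add S T)
          \<le> opnorm M (mult_ind (cball x r) \<circ> S) + opnorm M (mult_ind (cball x r) \<circ> T)"
        by (intro ind_add cball_sets roe_bounded Sr Tr)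
      then show ?case using elim by linarith
    qed
  qed
next
  fix c :: complex and T assume T: "T \<in> G_ideal M \<xi>"
  have Tr: "T \<in> roe M" using T by (auto simp: G_iff)
  show "op_scale c T \<in> G_ideal M \<xi>"
    unfolding G_iff
  proof (intro conjI allI impI roe_scale Tr)
    fix r e :: real assume r: "r > 0" and e: "e > 0"
    have "eventually (\<lambda>x. opnorm M (mult_ind (cball x r) \<circ> T) < e / (cmod c + 1)) \<xi>"
      by (rule G_ev[OF T r]) (use e in \<open>simp add: add_nonneg_pos\<close>)
    then show "eventually (\<lambda>x. opnorm M (mult_ind (cball x r) \<circ> op_scale c T) < e) \<xi>"
    proof eventually_elim
      case (elim x)
      have "opnorm M (mult_ind (cball x r) \<circ> op_scale c T) \<le> cmod c * opnorm M (mult_ind (cball x r) \<circ> T)"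
        by (intro ind_scale cball_sets roe_bounded Tr)
      also have "\<dots> < e"
        by (rule arith_scale[OF norm_ge_zero _ elim]) (intro opnorm_nonneg bop_ind_comp cball_sets roe_bounded Tr)
      finally show ?case .
    qed
  qed
next
  fix A T assume A: "A \<in> roe M" and T: "T \<in> G_ideal M \<xi>"
  have Tr: "T \<in> roe M" using T by (auto simp: G_iff)
  have Ab: "bounded_op M A" and Tb: "bounded_op M T" using A Tr roe_bounded by auto
  show "T \<circ> A \<in> G_ideal M \<xi>"
    unfolding G_iff
  proof (intro conjI allI impI roe_comp Tr A)
    fix r e :: real assume r: "r > 0" and e: "e > 0"
    have "eventually (\<lambda>x. opnorm M (mult_ind (cball x r) \<circ> T) < e / (opnorm M A + 1)) \<xi>"
      by (rule G_ev[OF T r]) (use e opnorm_nonneg[OF Ab] in \<open>simp add: add_nonneg_pos\<close>)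
    then show "eventually (\<lambda>x. opnorm M (mult_ind (cball x r) \<circ> (T \<circ> A)) < e) \<xi>"
    proof eventually_elim
      case (elim x)
      have "opnorm M (mult_ind (cball x r) \<circ> (T \<circ> A)) \<le> opnorm M (mult_ind (cball x r) \<circ> T) * opnorm M A"
        by (intro ind_right cball_sets Tb Ab)
      also have "\<dots> = opnorm M A * opnorm M (mult_ind (cball x r) \<circ> T)" by simp
      also have "\<dots> < e"
        by (rule arith_scale[OF opnorm_nonneg[OF Ab] _ elim]) (intro opnorm_nonneg bop_ind_comp cball_sets Tb)
      finally show ?case .
    qed
  qed
  show "A \<circ> T \<in> G_ideal M \<xi>"
    unfolding G_iff
  proof (intro conjI allI impI roe_comp Tr A)
    fix r e :: real assume r: "r > 0" and e: "e > 0"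
    define t where "t = opnorm M T"
    define a where "a = opnorm M A"
    have t0: "t \<ge> 0" and a0: "a \<ge> 0" using opnorm_nonneg Ab Tb by (auto simp: t_def a_def)
    define \<delta> where "\<delta> = min 1 (e / (2 * (t + 1)))"
    have \<delta>: "\<delta> > 0" using e t0 by (simp add: \<delta>_def)
    obtain k where k: "good_kernel k" "opnorm M (op_diff A (op_kernel M k)) < \<delta>"
      using roe_approx[OF A \<delta>] by auto
    obtain B s where kb: "kb k B s" using good_kernel_kb[OF k(1)] by blast
    have s: "s > 0" using kbD(3)[OF kb] .
    have "eventually (\<lambda>x. opnorm M (mult_ind (cball x (r + s)) \<circ> T) < e / (2 * (a + 2))) \<xi>"
      by (rule G_ev[OF T]) (use r s e a0 in auto)
    then show "eventually (\<lambda>x. opnorm M (mult_ind (cball x r) \<circ> (A \<circ> T)) < e) \<xi>"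
    proof eventually_elim
      case (elim x)
      have "opnorm M (mult_ind (cball x r) \<circ> (A \<circ> T))
          \<le> \<delta> * opnorm M T + (opnorm M A + \<delta>) * opnorm M (mult_ind (cball x (r + s)) \<circ> T)"
      proof (rule left_mult_bound[OF Ab Tb k(1) kb])
        show "opnorm M (op_diff A (op_kernel M k)) \<le> \<delta>" using k(2) by simp
        fix x' y assume "x' \<in> cball x r" "dist x' y \<le> s"
        then show "y \<in> cball x (r + s)" using dist_triangle[of x y x'] by auto
      qed auto
      also have "\<dots> < e"
        unfolding t_def[symmetric] a_def[symmetric]
        by (rule arith_left[OF t0 a0 e \<delta>_def]) (use elim opnorm_nonneg[OF bop_ind_comp[OF cball_sets Tb]] in auto)
      finally show ?case .
    qed
  qed
next
  fix T assume T: "T \<in> roe M" and app: "\<forall>e>0. \<exists>S\<in>G_ideal M \<xi>. opnorm M (op_diff T S) < e"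
  show "T \<in> G_ideal M \<xi>"
    unfolding G_iff
  proof (intro conjI allI impI T)
    fix r e :: real assume r: "r > 0" and e: "e > 0"
    obtain S where S: "S \<in> G_ideal M \<xi>" "opnorm M (op_diff T S) < e / 2" using app[rule_format, OF half_gt_zero[OF e]] by blast
    have Sr: "S \<in> roe M" using S by (auto simp: G_iff)
    have "eventually (\<lambda>x. opnorm M (mult_ind (cball x r) \<circ> S) < e / 2) \<xi>"
      by (rule G_ev[OF S(1) r half_gt_zero[OF e]])
    then show "eventually (\<lambda>x. opnorm M (mult_ind (cball x r) \<circ> T) < e) \<xi>"
    proof eventually_elim
      case (elim x)
      have "opnorm M (mult_ind (cball x r) \<circ> T) \<le> opnorm M (mult_ind (cball x r) \<circ> S) + opnorm M (op_diff T S)"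
        by (intro ind_closure cball_sets roe_bounded T Sr)
      then show ?case using elim S(2) by linarith
    qed
  qed
qed

lemma J_co_sub_G: "J_ideal M (co \<xi>) \<subseteq> G_ideal M \<xi>"
proof
  fix T assume T: "T \<in> J_ideal M (co \<xi>)"
  have Tr: "T \<in> roe M" using T by (simp add: J_iff)
  show "T \<in> G_ideal M \<xi>"
    unfolding G_iff
  proof (intro conjI allI impI Tr)
    fix r e :: real assume r: "r > 0" and e: "e > 0"
    obtain F where F: "F \<in> sets M" "eventually (\<lambda>x. x \<in> F) (co \<xi>)" "opnorm M (mult_ind F \<circ> T) < e"
      using J_ex[OF T e] by blast
    have "eventually (\<lambda>x. x \<in> rint F r) \<xi>" using F(2) r by (simp add: eventually_co)
    then show "eventually (\<lambda>x. opnorm M (mult_ind (cball x r) \<circ> T) < e) \<xi>"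
    proof eventually_elim
      case (elim x)
      have "opnorm M (mult_ind (cball x r) \<circ> T) \<le> opnorm M (mult_ind F \<circ> T)"
        by (rule opnorm_ind_mono[OF roe_bounded[OF Tr] F(1) rint_cball[OF elim]])
      then show ?case using F(3) by linarith
    qed
  qed
qed

lemma J_sub_G:
  assumes c: "coarse \<xi>"
  shows "J_ideal M \<xi> \<subseteq> G_ideal M \<xi>"
proof
  fix T assume T: "T \<in> J_ideal M \<xi>"
  have Tr: "T \<in> roe M" using T by (simp add: J_iff)
  show "T \<in> G_ideal M \<xi>"
    unfolding G_iff
  proof (intro conjI allI impI Tr)
    fix r e :: real assume r: "r > 0" and e: "e > 0"
    obtain F where F: "F \<in> sets M" "eventually (\<lambda>x. x \<in> F) \<xi>" "opnorm M (mult_ind F \<circ> T) < e"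
      using J_ex[OF T e] by blast
    have "eventually (\<lambda>x. x \<in> rint F r) \<xi>" using F(2) r c by (simp add: coarse_def)
    then show "eventually (\<lambda>x. opnorm M (mult_ind (cball x r) \<circ> T) < e) \<xi>"
    proof eventually_elim
      case (elim x)
      have "opnorm M (mult_ind (cball x r) \<circ> T) \<le> opnorm M (mult_ind F \<circ> T)"
        by (rule opnorm_ind_mono[OF roe_bounded[OF Tr] F(1) rint_cball[OF elim]])
      then show ?case using F(3) by linarith
    qed
  qed
qed

lemma J_closed:
  assumes c: "coarse \<xi>"
  shows "closed_ideal M (J_ideal M \<xi>)"
  unfolding closed_ideal_def
proof (intro conjI ballI allI impI)
  show "J_ideal M \<xi> \<subseteq> roe M" by (auto simp: J_iff)
  show "op_zero \<in> J_ideal M \<xi>"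
    unfolding J_iff
  proof (intro conjI allI impI roe_zero exI[of _ UNIV])
    fix e :: real assume e: "e > 0"
    show "UNIV \<in> sets M" using sets.top[of M] by simp
    show "eventually (\<lambda>x. x \<in> UNIV) \<xi>" by simp
    show "opnorm M (mult_ind UNIV \<circ> op_zero) < e" using ind_zero[of UNIV] e by simp
  qed
next
  fix S T assume S: "S \<in> J_ideal M \<xi>" and T: "T \<in> J_ideal M \<xi>"
  have Sr: "S \<in> roe M" and Tr: "T \<in> roe M" using S T by (auto simp: J_iff)
  have Sb: "bounded_op M S" and Tb: "bounded_op M T" using Sr Tr roe_bounded by auto
  show "op_add S T \<in> J_ideal M \<xi>"
    unfolding J_iff
  proof (intro conjI allI impI roe_add Sr Tr)
    fix e :: real assume e: "e > 0"
    obtain F1 where F1: "F1 \<in> sets M" "eventually (\<lambda>x. x \<in> F1) \<xi>" "opnorm M (mult_ind F1 \<circ> S) < e / 2"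
      using J_ex[OF S(1) half_gt_zero[OF e]] by blast
    obtain F2 where F2: "F2 \<in> sets M" "eventually (\<lambda>x. x \<in> F2) \<xi>" "opnorm M (mult_ind F2 \<circ> T) < e / 2"
      using J_ex[OF T half_gt_zero[OF e]] by blast
    show "\<exists>F. F \<in> sets M \<and> eventually (\<lambda>x. x \<in> F) \<xi> \<and> opnorm M (mult_ind F \<circ> op_add S T) < e"
    proof (intro exI[of _ "F1 \<inter> F2"] conjI)
      show "F1 \<inter> F2 \<in> sets M" using F1(1) F2(1) by simp
      show "eventually (\<lambda>x. x \<in> F1 \<inter> F2) \<xi>" using eventually_conj[OF F1(2) F2(2)] by simp
      have "opnorm M (mult_ind (F1 \<inter> F2) \<circ> op_add S T)
          \<le> opnorm M (mult_ind (F1 \<inter> F2) \<circ> S) + opnorm M (mult_ind (F1 \<inter> F2) \<circ> T)"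
        using F1(1) F2(1) by (intro ind_add Sb Tb) simp
      also have "\<dots> \<le> opnorm M (mult_ind F1 \<circ> S) + opnorm M (mult_ind F2 \<circ> T)"
        by (intro add_mono opnorm_ind_mono Sb Tb F1(1) F2(1)) auto
      also have "\<dots> < e" using F1(3) F2(3) by simp
      finally show "opnorm M (mult_ind (F1 \<inter> F2) \<circ> op_add S T) < e" .
    qed
  qed
next
  fix c :: complex and T assume T: "T \<in> J_ideal M \<xi>"
  have Tr: "T \<in> roe M" using T by (auto simp: J_iff)
  have Tb: "bounded_op M T" using Tr roe_bounded by auto
  show "op_scale c T \<in> J_ideal M \<xi>"
    unfolding J_iff
  proof (intro conjI allI impI roe_scale Tr)
    fix e :: real assume e: "e > 0"
    obtain F where F: "F \<in> sets M" "eventually (\<lambda>x. x \<in> F) \<xi>" "opnorm M (mult_ind F \<circ> T) < e / (cmod c + 1)"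
      using J_ex[OF T divide_pos_pos[OF e, of "cmod c + 1"]] by (auto simp: add_nonneg_pos)
    show "\<exists>F. F \<in> sets M \<and> eventually (\<lambda>x. x \<in> F) \<xi> \<and> opnorm M (mult_ind F \<circ> op_scale c T) < e"
    proof (intro exI[of _ F] conjI F(1) F(2))
      have "opnorm M (mult_ind F \<circ> op_scale c T) \<le> cmod c * opnorm M (mult_ind F \<circ> T)"
        by (intro ind_scale F(1) Tb)
      also have "\<dots> < e"
        by (rule arith_scale[OF norm_ge_zero _ F(3)]) (intro opnorm_nonneg bop_ind_comp F(1) Tb)
      finally show "opnorm M (mult_ind F \<circ> op_scale c T) < e" .
    qed
  qed
next
  fix A T assume A: "A \<in> roe M" and T: "T \<in> J_ideal M \<xi>"
  have Tr: "T \<in> roe M" using T by (auto simp: J_iff)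
  have Ab: "bounded_op M A" and Tb: "bounded_op M T" using A Tr roe_bounded by auto
  show "T \<circ> A \<in> J_ideal M \<xi>"
    unfolding J_iff
  proof (intro conjI allI impI roe_comp Tr A)
    fix e :: real assume e: "e > 0"
    obtain F where F: "F \<in> sets M" "eventually (\<lambda>x. x \<in> F) \<xi>" "opnorm M (mult_ind F \<circ> T) < e / (opnorm M A + 1)"
      using J_ex[OF T divide_pos_pos[OF e, of "opnorm M A + 1"]] opnorm_nonneg[OF Ab] by (auto simp: add_nonneg_pos)
    show "\<exists>F. F \<in> sets M \<and> eventually (\<lambda>x. x \<in> F) \<xi> \<and> opnorm M (mult_ind F \<circ> (T \<circ> A)) < e"
    proof (intro exI[of _ F] conjI F(1) F(2))
      have "opnorm M (mult_ind F \<circ> (T \<circ> A)) \<le> opnorm M (mult_ind F \<circ> T) * opnorm M A"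
        by (intro ind_right F(1) Tb Ab)
      also have "\<dots> = opnorm M A * opnorm M (mult_ind F \<circ> T)" by simp
      also have "\<dots> < e"
        by (rule arith_scale[OF opnorm_nonneg[OF Ab] _ F(3)]) (intro opnorm_nonneg bop_ind_comp F(1) Tb)
      finally show "opnorm M (mult_ind F \<circ> (T \<circ> A)) < e" .
    qed
  qed
  show "A \<circ> T \<in> J_ideal M \<xi>"
    unfolding J_iff
  proof (intro conjI allI impI roe_comp Tr A)
    fix e :: real assume e: "e > 0"
    define t where "t = opnorm M T"
    define a where "a = opnorm M A"
    have t0: "t \<ge> 0" and a0: "a \<ge> 0" using opnorm_nonneg Ab Tb by (auto simp: t_def a_def)
    define \<delta> where "\<delta> = min 1 (e / (2 * (t + 1)))"
    have \<delta>: "\<delta> > 0" using e t0 by (simp add: \<delta>_def)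
    obtain k where k: "good_kernel k" "opnorm M (op_diff A (op_kernel M k)) < \<delta>"
      using roe_approx[OF A \<delta>] by auto
    obtain B s where kb: "kb k B s" using good_kernel_kb[OF k(1)] by blast
    have s: "s > 0" using kbD(3)[OF kb] .
    have e2: "e / (2 * (a + 2)) > 0" using e a0 by simp
    obtain F where F: "F \<in> sets M" "eventually (\<lambda>x. x \<in> F) \<xi>" "opnorm M (mult_ind F \<circ> T) < e / (2 * (a + 2))"
      using J_ex[OF T e2] by blast
    show "\<exists>F. F \<in> sets M \<and> eventually (\<lambda>x. x \<in> F) \<xi> \<and> opnorm M (mult_ind F \<circ> (A \<circ> T)) < e"
    proof (intro exI[of _ "rint F s"] conjI rint_sets)
      show "eventually (\<lambda>x. x \<in> rint F s) \<xi>" using F(2) s c by (simp add: coarse_def)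
      have "opnorm M (mult_ind (rint F s) \<circ> (A \<circ> T))
          \<le> \<delta> * opnorm M T + (opnorm M A + \<delta>) * opnorm M (mult_ind F \<circ> T)"
      proof (rule left_mult_bound[OF Ab Tb k(1) kb _ rint_sets F(1)])
        show "opnorm M (op_diff A (op_kernel M k)) \<le> \<delta>" using k(2) by simp
        fix x y assume "x \<in> rint F s" "dist x y \<le> s"
        then show "y \<in> F" by (rule rint_sub)
      qed
      also have "\<dots> < e"
        unfolding t_def[symmetric] a_def[symmetric]
        by (rule arith_left[OF t0 a0 e \<delta>_def]) (use F(3) in \<open>auto intro: opnorm_nonneg bop_ind_comp Tb F(1)\<close>)
      finally show "opnorm M (mult_ind (rint F s) \<circ> (A \<circ> T)) < e" .
    qed
  qed
next
  fix T assume T: "T \<in> roe M" and app: "\<forall>e>0. \<exists>S\<in>J_ideal M \<xi>. opnorm M (op_diff T S) < e"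
  show "T \<in> J_ideal M \<xi>"
    unfolding J_iff
  proof (intro conjI allI impI T)
    fix e :: real assume e: "e > 0"
    obtain S where S: "S \<in> J_ideal M \<xi>" "opnorm M (op_diff T S) < e / 2" using app[rule_format, OF half_gt_zero[OF e]] by blast
    have Sr: "S \<in> roe M" using S by (auto simp: J_iff)
    obtain F where F: "F \<in> sets M" "eventually (\<lambda>x. x \<in> F) \<xi>" "opnorm M (mult_ind F \<circ> S) < e / 2"
      using J_ex[OF S(1) half_gt_zero[OF e]] by blast
    show "\<exists>F. F \<in> sets M \<and> eventually (\<lambda>x. x \<in> F) \<xi> \<and> opnorm M (mult_ind F \<circ> T) < e"
    proof (intro exI[of _ F] conjI F(1) F(2))
      have "opnorm M (mult_ind F \<circ> T) \<le> opnorm M (mult_ind F \<circ> S) + opnorm M (op_diff T S)"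
        by (intro ind_closure F(1) roe_bounded T Sr)
      then show "opnorm M (mult_ind F \<circ> T) < e" using F(3) S(2) by linarith
    qed
  qed
qed

end

theorem lemma5p2:
  fixes M :: "'a::metric_space measure" and \<xi> :: "'a filter"
  assumes sets_M: "sets M = sets borel"
    and noncompact: "\<not> compact (UNIV :: 'a set)"
    and proper: "\<forall>(x::'a) r. compact (cball x r)"
    and radon: "\<forall>K. compact K \<longrightarrow> emeasure M K < \<infinity>"
    and support: "\<forall>U. open U \<and> U \<noteq> {} \<longrightarrow> emeasure M U > 0"
    and balls_pos: "\<forall>x r. r > 0 \<longrightarrow> emeasure M (cball x r) > 0"
    and balls_bdd: "\<forall>r>0. \<exists>C::real. \<forall>x. emeasure M (cball x r) \<le> ennreal C"
    and filt: "\<xi> \<noteq> bot"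
  shows "closed_ideal M (G_ideal M \<xi>) \<and> J_ideal M (co \<xi>) \<subseteq> G_ideal M \<xi> \<and>
         (coarse \<xi> \<longrightarrow> closed_ideal M (J_ideal M \<xi>) \<and> J_ideal M \<xi> \<subseteq> G_ideal M \<xi>)"
proof -
  interpret ctx M by (unfold_locales) (use sets_M proper radon balls_bdd in auto)
  show ?thesis using G_closed J_co_sub_G J_closed J_sub_G by blast
qed

end
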